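(* Let $\tau$ be a nonzero integer, $m\geq1$, and $R=\mathbb{Q}[q^{\pm1/2},a^{\pm1/2}]$. With $g_m(q,a)$ as defined in the context, \[ \{m\}\{m\tau\}\,g_m(q,a)=\sum_{d\mid m}\ \sum_{|\nu|=m/d}\frac{\mu(d)(-1)^{m\tau/d}}{\mathfrak{z}_\nu}\,\frac{\{m\nu\tau\}}{\{d\nu\}}\,\{d\nu\}_a, \] and this element of $R$ is divisible in $R$ by $\{m\tau\}\{m\}/\{1\}^2$.
   Context: $\{n\}_x=x^{n/2}-x^{-n/2}$, $\{n\}=\{n\}_q$; for a partition $\nu=(\nu_1,\dots,\nu_\ell)$ and integer $c$, $\{c\nu\}_x=\prod_i\{c\nu_i\}_x$, $\{c\nu\}=\{c\nu\}_q$, $\{m\nu\tau\}=\prod_i\{m\nu_i\tau\}$, and $\frac{\{m\nu\tau\}}{\{d\nu\}}=\prod_i\frac{\{m\nu_i\tau\}}{\{d\nu_i\}}$. $\mathfrak{z}_\nu=\prod_j j^{k_j}k_j!$ with $k_j$ the number of parts equal to $j$; $\mu$ is the Möbius function. $\mathcal{Z}_m(q,a)=(-1)^{m\tau}\sum_{|\nu|=m}\frac{1}{\mathfrak{z}_\nu}\frac{\{m\nu\tau\}}{\{m\}\{m\tau\}}\frac{\{\nu\}_a}{\{\nu\}}$ and $g_m(q,a)=\sum_{d\mid m}\mu(d)\mathcal{Z}_{m/d}(q^d,a^d)$. *)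

theory Defs
  imports "HOL-Computational_Algebra.Computational_Algebra" "HOL-Library.Multiset"
begin

text \<open>We work in the field of rational functions K = Frac(Q[x,y]), realised as
  the fraction field of bivariate polynomials (rat poly poly), where
  x = q^(1/2) and y = a^(1/2).  The ring R = Q[q^(+-1/2), a^(+-1/2)] is the
  subring Q[x,y][1/(xy)] of K.\<close>

type_synonym rf = "rat poly poly fract"

definition emb :: "rat poly poly \<Rightarrow> rf" where
  "emb P = Fract P 1"

text \<open>qh = q^(1/2) (the inner variable), ah = a^(1/2) (the outer variable).\<close>
definition qh :: rf where "qh = emb [:[:0, 1:]:]"
definition ah :: rf where "ah = emb [:0, 1:]"

text \<open>br n s = {n}_{s^2} = s^n - s^(-n); so {n} = br n qh and {n}_a = br n ah,
  and {n}_{x^d} = br n (s^d) when s is the square root of x.\<close>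
definition br :: "int \<Rightarrow> rf \<Rightarrow> rf" where
  "br n s = s powi n - s powi (- n)"

definition partitions :: "nat \<Rightarrow> nat multiset set" where
  "partitions n = {\<nu>. (\<forall>i\<in>#\<nu>. 0 < i) \<and> sum_mset \<nu> = n}"

definition zee :: "nat multiset \<Rightarrow> nat" where
  "zee \<nu> = (\<Prod>j\<in>set_mset \<nu>. j ^ count \<nu> j * fact (count \<nu> j))"

definition mobius :: "nat \<Rightarrow> int" where
  "mobius d = (if squarefree d then (-1) ^ card (prime_factors d) else 0)"

text \<open>Zf tau m s t = Z_m(s^2, t^2) (with parameter tau).\<close>
definition Zf :: "int \<Rightarrow> nat \<Rightarrow> rf \<Rightarrow> rf \<Rightarrow> rf" where
  "Zf \<tau> m s t = (-1) powi (int m * \<tau>) *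
     (\<Sum>\<nu>\<in>partitions m. (1 / of_nat (zee \<nu>)) *
        ((\<Prod>i\<in>#\<nu>. br (int m * int i * \<tau>) s) / (br (int m) s * br (int m * \<tau>) s)) *
        (\<Prod>i\<in>#\<nu>. br (int i) t / br (int i) s))"

text \<open>gf tau m s t = g_m(s^2, t^2) = sum over d | m of mu(d) Z_{m/d}(q^d, a^d).\<close>
definition gf :: "int \<Rightarrow> nat \<Rightarrow> rf \<Rightarrow> rf \<Rightarrow> rf" where
  "gf \<tau> m s t = (\<Sum>d\<in>{d. d dvd m}. of_int (mobius d) * Zf \<tau> (m div d) (s ^ d) (t ^ d))"

definition in_R :: "rf \<Rightarrow> bool" where
  "in_R z \<longleftrightarrow> (\<exists>P k. z = emb P / (qh * ah) ^ k)"

end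

theory Submission
  imports Defs
begin

definition brg :: "int \<Rightarrow> 'a::field \<Rightarrow> 'a" where
  "brg n s = s powi n - s powi (- n)"

definition gsum :: "nat \<Rightarrow> 'a::field \<Rightarrow> 'a" where
  "gsum n u = (\<Sum>j<n. u powi (int n - 1 - 2 * int j))"

lemma gsum_Suc: "(u::'a::field) \<noteq> 0 \<Longrightarrow> gsum (Suc n) u = u * gsum n u + u powi (- int n)"
proof -
  assume u: "u \<noteq> 0"
  have "gsum (Suc n) u = (\<Sum>j<n. u powi (int n - 2 * int j)) + u powi (- int n)"
    unfolding gsum_def by (simp add: algebra_simps)
  also have "(\<Sum>j<n. u powi (int n - 2 * int j)) = u * gsum n u"
    unfolding gsum_def sum_distrib_left
    by (rule sum.cong) (auto simp: u simp flip: power_int_add_1' intro!: arg_cong[where f="power_int u"])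
  finally show ?thesis .
qed

lemma gsum_brg: "(u::'a::field) \<noteq> 0 \<Longrightarrow> gsum n u * (u - inverse u) = u powi int n - u powi (- int n)"
proof (induction n)
  case 0 then show ?case by (simp add: gsum_def)
next
  case (Suc n)
  have "gsum (Suc n) u * (u - inverse u) = u * (gsum n u * (u - inverse u)) + u powi (- int n) * (u - inverse u)"
    using Suc.prems by (simp add: gsum_Suc algebra_simps)
  also have "\<dots> = u * (u powi int n - u powi (- int n)) + u powi (- int n) * (u - inverse u)"
    using Suc by simp
  also have "\<dots> = u * (u ^ n - inverse (u ^ n)) + inverse (u ^ n) * (u - inverse u)"
    by (simp add: power_int_minus)
  also have "\<dots> = u ^ Suc n - inverse (u ^ Suc n)"
    using Suc.prems by (simp add: field_simps)
  also have "\<dots> = u powi int (Suc n) - u powi (- int (Suc n))"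
    by (simp only: power_int_minus power_int_of_nat)
  finally show ?case .
qed

definition gs :: "int \<Rightarrow> int \<Rightarrow> 'a::field \<Rightarrow> 'a" where
  "gs r B s = (if 0 \<le> r then gsum (nat r) (s powi B) else - gsum (nat (- r)) (s powi B))"

lemma brg_neg: "brg (- n) s = - brg n s"
  by (simp add: brg_def)

lemma brg_gs: "(s::'a::field) \<noteq> 0 \<Longrightarrow> brg (r * B) s = gs r B s * brg B s"
proof -
  assume s: "s \<noteq> 0"
  define u where "u = s powi B"
  have u: "u \<noteq> 0" using s by (simp add: u_def)
  have bB: "brg B s = u - inverse u" by (simp add: brg_def u_def power_int_minus)
  have key: "brg (r * B) s = u powi r - u powi (- r)"
    by (simp add: brg_def u_def flip: power_int_mult) (simp add: mult.commute)
  show ?thesis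
  proof (cases "0 \<le> r")
    case True
    then show ?thesis using gsum_brg[OF u, of "nat r"] by (simp add: key bB gs_def u_def[symmetric])
  next
    case False
    have "gsum (nat (- r)) u * (u - inverse u) = u powi (- r) - u powi r"
      using gsum_brg[OF u, of "nat (- r)"] False by simp
    moreover have "gs r B s = - gsum (nat (-r)) u" using False by (simp add: gs_def u_def)
    ultimately show ?thesis unfolding key bB
      by (metis minus_diff_eq mult_minus_left)
  qed
qed

lemma brg_power: "(s::'a::field) \<noteq> 0 \<Longrightarrow> brg n (s ^ d) = brg (n * int d) s"
  by (simp add: brg_def power_int_power mult.commute)

lemma br_brg: "br = brg"
  by (simp add: fun_eq_iff br_def brg_def)


lemma emb_mult: "emb (P * Q) = emb P * emb Q" by (simp add: emb_def)
lemma emb_add: "emb (P + Q) = emb P + emb Q" by (simp add: emb_def)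
lemma emb_diff: "emb (P - Q) = emb P - emb Q" by (simp add: emb_def)
lemma emb_0: "emb 0 = 0" by (simp add: emb_def Zero_fract_def)
lemma emb_1: "emb 1 = 1" by (simp add: emb_def One_fract_def)
lemma emb_inj: "emb P = emb Q \<longleftrightarrow> P = Q" by (simp add: emb_def eq_fract)
lemma emb_power: "emb (P ^ n) = emb P ^ n"
  by (induction n) (simp_all add: emb_1 emb_mult)
lemma emb_eq_0: "emb P = 0 \<longleftrightarrow> P = 0" using emb_inj[of P 0] by (simp add: emb_0)

lemma qh_nz: "qh \<noteq> 0" by (simp add: qh_def emb_eq_0)
lemma ah_nz: "ah \<noteq> 0" by (simp add: ah_def emb_eq_0)

lemma qh_power_ne_1: "k > 0 \<Longrightarrow> qh ^ k \<noteq> 1"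
proof
  assume k: "k > 0" and e: "qh ^ k = 1"
  have "[:[:0, 1::rat:]:] ^ k = [:[:0,1:] ^ k:]"
    by (induction k) simp_all
  with e have "[:[:0, 1::rat:] ^ k:] = 1"
    by (simp add: qh_def flip: emb_power emb_1 add: emb_inj)
  hence "[:0, 1::rat:] ^ k = 1" by (simp add: one_pCons)
  hence "degree ([:0, 1::rat:] ^ k) = 0" by simp
  thus False using k by (simp add: degree_power_eq)
qed


lemma brg_eq_0_iff: "(s::'a::field) \<noteq> 0 \<Longrightarrow> brg B s = 0 \<longleftrightarrow> s powi (2 * B) = 1"
proof -
  assume s: "s \<noteq> 0"
  have "brg B s = 0 \<longleftrightarrow> s powi B = inverse (s powi B)" unfolding brg_def power_int_minus by (rule right_minus_eq)
  also have "\<dots> \<longleftrightarrow> s powi B * s powi B = s powi B * inverse (s powi B)"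
    using s by (simp only: mult_cancel_left power_int_eq_0_iff) simp
  also have "s powi B * inverse (s powi B) = 1" using s by simp
  also have "s powi B * s powi B = s powi (2 * B)" by (subst mult_2, subst power_int_add) (use s in auto)
  finally show ?thesis .
qed


lemma brg_qh_nz: "B \<noteq> 0 \<Longrightarrow> brg B qh \<noteq> 0"
proof
  assume B: "B \<noteq> 0" and z: "brg B qh = 0"
  hence e: "qh powi (2 * B) = 1" using brg_eq_0_iff qh_nz by blast
  show False
  proof (cases "B > 0")
    case True
    then have "qh ^ nat (2 * B) = 1" using e by (simp add: power_int_nonneg_exp)
    then show False using qh_power_ne_1[of "nat (2*B)"] True by simp
  next
    case False
    then have "qh powi (2 * B) = inverse (qh ^ nat (-2 * B))"
      using power_int_minus[of qh "-2*B"] power_int_nonneg_exp[of "-2*B" qh] by simp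
    then have "qh ^ nat (-2 * B) = 1" using e by simp
    then show False using qh_power_ne_1[of "nat (-2*B)"] False B by simp
  qed
qed


lemma prod_swap:
  fixes f g h :: "nat \<Rightarrow> 'a::field"
  shows "(\<Prod>i\<in>#M. f i) * (\<Prod>i\<in>#M. g i / h i) = (\<Prod>i\<in>#M. f i / h i) * (\<Prod>i\<in>#M. g i)"
proof -
  have a: "(\<Prod>i\<in>#M. f i) * (\<Prod>i\<in>#M. g i / h i) = (\<Prod>i\<in>#M. f i * (g i / h i))"
    by (rule prod_mset.distrib[symmetric])
  have b: "(\<Prod>i\<in>#M. f i / h i) * (\<Prod>i\<in>#M. g i) = (\<Prod>i\<in>#M. f i / h i * g i)"
    by (rule prod_mset.distrib[symmetric])
  have c: "(\<lambda>i. f i * (g i / h i)) = (\<lambda>i. f i / h i * g i)" by (simp add: fun_eq_iff)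
  show ?thesis using a b c by simp
qed

lemma br_pow_qh: "br n (qh ^ d) = br (n * int d) qh"
  by (simp add: br_brg brg_power qh_nz)
lemma br_pow_ah: "br n (ah ^ d) = br (n * int d) ah"
  by (simp add: br_brg brg_power ah_nz)

lemma part1:
  fixes \<tau> :: int and m :: nat
  assumes "\<tau> \<noteq> 0" and "1 \<le> m"
  shows "br (int m) qh * br (int m * \<tau>) qh * gf \<tau> m qh ah =
           (\<Sum>d\<in>{d. d dvd m}. \<Sum>\<nu>\<in>partitions (m div d).
              (of_int (mobius d) * (-1) powi (int (m div d) * \<tau>) / of_nat (zee \<nu>)) *
              (\<Prod>i\<in>#\<nu>. br (int m * int i * \<tau>) qh / br (int d * int i) qh) *
              (\<Prod>i\<in>#\<nu>. br (int d * int i) ah))"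
proof -
  define X where "X = br (int m) qh"
  define Y where "Y = br (int m * \<tau>) qh"
  have X: "X \<noteq> 0" unfolding X_def br_brg using assms by (intro brg_qh_nz) simp
  have Y: "Y \<noteq> 0" unfolding Y_def br_brg using assms by (intro brg_qh_nz) simp
  have "X * Y * gf \<tau> m qh ah = (\<Sum>d\<in>{d. d dvd m}. X * Y * (of_int (mobius d) * Zf \<tau> (m div d) (qh ^ d) (ah ^ d)))"
    unfolding gf_def by (simp add: sum_distrib_left)
  also have "\<dots> = (\<Sum>d\<in>{d. d dvd m}. \<Sum>\<nu>\<in>partitions (m div d).
              (of_int (mobius d) * (-1) powi (int (m div d) * \<tau>) / of_nat (zee \<nu>)) *
              (\<Prod>i\<in>#\<nu>. br (int m * int i * \<tau>) qh / br (int d * int i) qh) *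
              (\<Prod>i\<in>#\<nu>. br (int d * int i) ah))"
  proof (rule sum.cong[OF refl])
    fix d assume "d \<in> {d. d dvd m}"
    then have dm: "d dvd m" by simp
    define N where "N = m div d"
    have mN: "int m = int N * int d" using dm by (simp add: N_def flip: of_nat_mult)
    have e1: "\<And>i. br (int N * int i * \<tau>) (qh ^ d) = br (int m * int i * \<tau>) qh"
      by (simp add: br_pow_qh mN mult_ac)
    have e2: "br (int N) (qh ^ d) = X" by (simp add: br_pow_qh mN X_def)
    have e3: "br (int N * \<tau>) (qh ^ d) = Y" by (simp add: br_pow_qh mN Y_def mult_ac)
    have e4: "\<And>i. br (int i) (ah ^ d) = br (int d * int i) ah" by (simp add: br_pow_ah mult_ac)
    have e2': "br (int N * int d) qh = X" by (simp add: X_def mN)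
    have e5: "\<And>i. br (int i) (qh ^ d) = br (int d * int i) qh" by (simp add: br_pow_qh mult_ac)
    show "X * Y * (of_int (mobius d) * Zf \<tau> (m div d) (qh ^ d) (ah ^ d)) = (\<Sum>\<nu>\<in>partitions (m div d).
              (of_int (mobius d) * (-1) powi (int (m div d) * \<tau>) / of_nat (zee \<nu>)) *
              (\<Prod>i\<in>#\<nu>. br (int m * int i * \<tau>) qh / br (int d * int i) qh) *
              (\<Prod>i\<in>#\<nu>. br (int d * int i) ah))"
      unfolding N_def[symmetric] Zf_def e1 e2 e3 e4 e5 sum_distrib_left
      apply (rule sum.cong[OF refl])
      subgoal for \<nu>
        using X Y e2' prod_swap[of "\<lambda>i. br (int m * int i * \<tau>) qh" \<nu> "\<lambda>i. br (int d * int i) ah" "\<lambda>i. br (int d * int i) qh"]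
        by (simp add: field_simps)
      done
  qed
  finally show ?thesis unfolding X_def Y_def .
qed

lemma sum_hom_gen:
  assumes "\<And>a b. f (a + b) = f a + f b" "f 0 = 0"
  shows "f (sum g A) = sum (\<lambda>i. f (g i)) A"
proof (cases "finite A")
  case True then show ?thesis by (induction A rule: finite_induct) (simp_all add: assms)
qed (simp add: assms)

lemma map_poly_add_hom:
  assumes "\<And>a b. f (a + b) = f a + f b" "f 0 = 0"
  shows "map_poly f (p + q) = map_poly f p + map_poly f q"
  by (simp add: poly_eq_iff coeff_map_poly assms)

lemma map_poly_mult_hom:
  fixes f :: "'a::comm_semiring_0 \<Rightarrow> 'b::comm_semiring_0"
  assumes "\<And>a b. f (a + b) = f a + f b" "\<And>a b. f (a * b) = f a * f b" "f 0 = 0"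
  shows "map_poly f (p * q) = map_poly f p * map_poly f q"
proof -
  have "coeff (map_poly f (p * q)) n = coeff (map_poly f p * map_poly f q) n" for n
    by (simp add: coeff_map_poly assms(3) coeff_mult sum_hom_gen[of f, OF assms(1,3)] assms(2))
  then show ?thesis by (simp add: poly_eq_iff)
qed

definition mq :: "rat poly \<Rightarrow> complex poly" where "mq = map_poly of_rat"
definition mqq :: "rat poly poly \<Rightarrow> complex poly poly" where "mqq = map_poly mq"

lemma mq_add: "mq (a + b) = mq a + mq b" unfolding mq_def by (rule map_poly_add_hom) (simp_all add: of_rat_add)
lemma mq_mult: "mq (a * b) = mq a * mq b" unfolding mq_def by (rule map_poly_mult_hom) (simp_all add: of_rat_add of_rat_mult)
lemma mq_0[simp]: "mq 0 = 0" by (simp add: mq_def)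
lemma mq_1[simp]: "mq 1 = 1" by (simp add: mq_def)
lemma mq_pCons[simp]: "mq (pCons a p) = pCons (of_rat a) (mq p)" by (simp add: mq_def map_poly_pCons)
lemma mqq_add: "mqq (a + b) = mqq a + mqq b" unfolding mqq_def by (rule map_poly_add_hom) (simp_all add: mq_add)
lemma mqq_mult: "mqq (a * b) = mqq a * mqq b" unfolding mqq_def by (rule map_poly_mult_hom) (simp_all add: mq_add mq_mult)
lemma mqq_0[simp]: "mqq 0 = 0" by (simp add: mqq_def)
lemma mqq_1[simp]: "mqq 1 = 1" by (simp add: mqq_def)
lemma mqq_pCons[simp]: "mqq (pCons a p) = pCons (mq a) (mqq p)" by (simp add: mqq_def map_poly_pCons)
lemma mqq_power: "mqq (p ^ n) = mqq p ^ n" by (induction n) (simp_all add: mqq_mult)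

definition ev :: "rat poly poly \<Rightarrow> complex \<Rightarrow> complex \<Rightarrow> complex" where
  "ev P x y = poly (poly (mqq P) [:y:]) x"

lemma ev_add: "ev (P + Q) x y = ev P x y + ev Q x y" by (simp add: ev_def mqq_add)
lemma ev_mult: "ev (P * Q) x y = ev P x y * ev Q x y" by (simp add: ev_def mqq_mult)
lemma ev_1: "ev 1 x y = 1" by (simp add: ev_def)
lemma ev_power: "ev (P ^ n) x y = ev P x y ^ n" by (induction n) (simp_all add: ev_mult ev_1)

definition QQ :: "rat poly poly" where "QQ = [:0, [:0, 1:]:]"
lemma ev_QQ: "ev QQ x y = x * y" by (simp add: ev_def QQ_def)
lemma emb_QQ: "emb QQ = qh * ah"
  by (simp add: qh_def ah_def QQ_def flip: emb_mult)
lemma QQ_nz: "emb QQ \<noteq> 0" by (simp add: emb_QQ qh_nz ah_nz)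

definition Rrep :: "rf \<Rightarrow> (complex \<Rightarrow> complex \<Rightarrow> complex) \<Rightarrow> bool" where
  "Rrep z f \<longleftrightarrow> (\<exists>P k. z = emb P / emb QQ ^ k \<and> (\<forall>x y. x \<noteq> 0 \<longrightarrow> y \<noteq> 0 \<longrightarrow> f x y = ev P x y / (x * y) ^ k))"

lemma Rrep_in_R: "Rrep z f \<Longrightarrow> in_R z"
  unfolding Rrep_def in_R_def emb_QQ by blast

lemma Rrep_cong: "Rrep z f \<Longrightarrow> (\<And>x y. x \<noteq> 0 \<Longrightarrow> y \<noteq> 0 \<Longrightarrow> f x y = g x y) \<Longrightarrow> Rrep z g"
  unfolding Rrep_def by metis

lemma Rrep_emb: "Rrep (emb P) (\<lambda>x y. ev P x y)"
  unfolding Rrep_def by (rule exI[of _ P], rule exI[of _ 0]) simp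

lemma Rrep_add:
  assumes "Rrep a f" "Rrep b g" shows "Rrep (a + b) (\<lambda>x y. f x y + g x y)"
proof -
  obtain P k where a: "a = emb P / emb QQ ^ k" and f: "\<forall>x y. x \<noteq> 0 \<longrightarrow> y \<noteq> 0 \<longrightarrow> f x y = ev P x y / (x * y) ^ k"
    using assms(1) unfolding Rrep_def by blast
  obtain P' k' where b: "b = emb P' / emb QQ ^ k'" and g: "\<forall>x y. x \<noteq> 0 \<longrightarrow> y \<noteq> 0 \<longrightarrow> g x y = ev P' x y / (x * y) ^ k'"
    using assms(2) unfolding Rrep_def by blast
  have "a + b = emb (P * QQ ^ k' + P' * QQ ^ k) / emb QQ ^ (k + k')"
    using QQ_nz by (simp add: a b emb_add emb_mult emb_power field_simps power_add)
  moreover have "f x y + g x y = ev (P * QQ ^ k' + P' * QQ ^ k) x y / (x * y) ^ (k + k')" if "x \<noteq> 0" "y \<noteq> 0" for x y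
  proof -
    have "ev (P * QQ ^ k' + P' * QQ ^ k) x y / (x * y) ^ (k + k') =
        (ev P x y * (x*y)^k' + ev P' x y * (x*y)^k)/((x*y)^k*(x*y)^k')"
      by (simp add: ev_add ev_mult ev_power ev_QQ power_add)
    also have "\<dots> = ev P x y/(x*y)^k + ev P' x y/(x*y)^k'" using that by (simp add: field_simps)
    finally show ?thesis using f g that by simp
  qed
  ultimately show ?thesis unfolding Rrep_def by blast
qed

lemma Rrep_mult:
  assumes "Rrep a f" "Rrep b g" shows "Rrep (a * b) (\<lambda>x y. f x y * g x y)"
proof -
  obtain P k where a: "a = emb P / emb QQ ^ k" and f: "\<forall>x y. x \<noteq> 0 \<longrightarrow> y \<noteq> 0 \<longrightarrow> f x y = ev P x y / (x * y) ^ k"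
    using assms(1) unfolding Rrep_def by blast
  obtain P' k' where b: "b = emb P' / emb QQ ^ k'" and g: "\<forall>x y. x \<noteq> 0 \<longrightarrow> y \<noteq> 0 \<longrightarrow> g x y = ev P' x y / (x * y) ^ k'"
    using assms(2) unfolding Rrep_def by blast
  have "a * b = emb (P * P') / emb QQ ^ (k + k')"
    using QQ_nz by (simp add: a b emb_mult power_add)
  moreover have "f x y * g x y = ev (P * P') x y / (x * y) ^ (k + k')" if "x \<noteq> 0" "y \<noteq> 0" for x y
    using f g that by (simp add: ev_mult power_add)
  ultimately show ?thesis unfolding Rrep_def by blast
qed

lemma Rrep_const_rat: "Rrep (emb [:[:c:]:]) (\<lambda>x y. of_rat c)"
  using Rrep_emb[of "[:[:c:]:]"] by (simp add: ev_def)

lemma emb_of_int: "emb [:[:of_int n:]:] = of_int n"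
proof -
  have "[:[:of_int n:]:] = (of_int n :: rat poly poly)" by (simp add: of_int_poly)
  moreover have "Fract (of_int k) 1 = (of_int k :: rf)" for k
    by (cases k rule: int_cases) (simp_all add: Fract_of_nat_eq minus_fract[symmetric] del: minus_fract of_nat_Suc)
  ultimately show ?thesis by (simp add: emb_def)
qed

lemma Rrep_of_int: "Rrep (of_int n) (\<lambda>x y. of_int n)"
  using Rrep_const_rat[of "of_int n"] by (simp add: emb_of_int)

lemma Rrep_inv_of_nat: "Rrep (1 / of_nat n) (\<lambda>x y. 1 / of_nat n)"
proof -
  have "emb [:[:1 / of_nat n:]:] = 1 / of_nat n"
  proof (cases "n = 0")
    case True then show ?thesis by (simp add: emb_0)
  next
    case False
    have "emb [:[:1 / of_nat n:]:] * of_nat n = emb [:[:1 / of_nat n:]:] * emb [:[:of_int (int n):]:]"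
      by (simp only: emb_of_int) simp
    also have "\<dots> = emb 1"
      using False by (simp flip: emb_mult add: one_pCons)
    finally show ?thesis using False by (simp add: emb_1 field_simps)
  qed
  with Rrep_const_rat[of "1 / of_nat n"] show ?thesis by (simp add: of_rat_divide)
qed

lemma Rrep_qh: "Rrep qh (\<lambda>x y. x)"
  using Rrep_emb[of "[:[:0,1:]:]"] by (simp add: ev_def qh_def)
lemma Rrep_ah: "Rrep ah (\<lambda>x y. y)"
  using Rrep_emb[of "[:0,1:]"] by (simp add: ev_def ah_def)
lemma Rrep_inv_qh: "Rrep (inverse qh) (\<lambda>x y. inverse x)"
proof -
  have "inverse qh = emb [:0,1:] / emb QQ ^ 1" using qh_nz ah_nz by (simp add: emb_QQ inverse_eq_divide flip: ah_def)
  moreover have "inverse x = ev [:0,1:] x y / (x * y) ^ 1" if "x \<noteq> 0" "y \<noteq> 0" for x y :: complex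
    using that by (simp add: ev_def inverse_eq_divide)
  ultimately show ?thesis unfolding Rrep_def by blast
qed
lemma Rrep_inv_ah: "Rrep (inverse ah) (\<lambda>x y. inverse y)"
proof -
  have "inverse ah = emb [:[:0,1:]:] / emb QQ ^ 1" using qh_nz ah_nz by (simp add: emb_QQ inverse_eq_divide flip: qh_def)
  moreover have "inverse y = ev [:[:0,1:]:] x y / (x * y) ^ 1" if "x \<noteq> 0" "y \<noteq> 0" for x y :: complex
    using that by (simp add: ev_def inverse_eq_divide)
  ultimately show ?thesis unfolding Rrep_def by blast
qed

lemma Rrep_0: "Rrep 0 (\<lambda>x y. 0)"
  using Rrep_emb[of 0] by (simp add: emb_0 ev_def)
lemma Rrep_1: "Rrep 1 (\<lambda>x y. 1)"
  using Rrep_emb[of 1] by (simp add: emb_1 ev_1)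

lemma Rrep_sum:
  assumes "finite A" "\<And>i. i \<in> A \<Longrightarrow> Rrep (a i) (f i)"
  shows "Rrep (\<Sum>i\<in>A. a i) (\<lambda>x y. \<Sum>i\<in>A. f i x y)"
  using assms
proof (induction A rule: finite_induct)
  case empty then show ?case by (simp add: Rrep_0)
next
  case (insert j A)
  have "Rrep (a j + (\<Sum>i\<in>A. a i)) (\<lambda>x y. f j x y + (\<Sum>i\<in>A. f i x y))"
    by (rule Rrep_add) (use insert in auto)
  then show ?case using insert by simp
qed

lemma Rrep_prod_mset:
  assumes "\<And>i. i \<in># M \<Longrightarrow> Rrep (a i) (f i)"
  shows "Rrep (\<Prod>i\<in>#M. a i) (\<lambda>x y. \<Prod>i\<in>#M. f i x y)"
  using assms
proof (induction M)
  case empty then show ?case by (simp add: Rrep_1)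
next
  case (add j M)
  have "Rrep (a j * (\<Prod>i\<in>#M. a i)) (\<lambda>x y. f j x y * (\<Prod>i\<in>#M. f i x y))"
    by (rule Rrep_mult) (use add in auto)
  then show ?case by simp
qed

lemma Rrep_power: "Rrep a f \<Longrightarrow> Rrep (a ^ n) (\<lambda>x y. f x y ^ n)"
  by (induction n) (simp_all add: Rrep_1 Rrep_mult)

lemma Rrep_uminus: "Rrep a f \<Longrightarrow> Rrep (- a) (\<lambda>x y. - f x y)"
  using Rrep_mult[OF Rrep_of_int[of "-1"]] by simp

lemma Rrep_diff: "Rrep a f \<Longrightarrow> Rrep b g \<Longrightarrow> Rrep (a - b) (\<lambda>x y. f x y - g x y)"
  using Rrep_add[OF _ Rrep_uminus] by fastforce

lemma Rrep_qh_powi: "Rrep (qh powi n) (\<lambda>x y. x powi n)"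
proof (cases "0 \<le> n")
  case True
  then show ?thesis using Rrep_power[OF Rrep_qh, of "nat n"] by (simp add: power_int_def)
next
  case False
  then show ?thesis using Rrep_power[OF Rrep_inv_qh, of "nat (-n)"] by (simp add: power_int_def)
qed

lemma Rrep_ah_powi: "Rrep (ah powi n) (\<lambda>x y. y powi n)"
proof (cases "0 \<le> n")
  case True
  then show ?thesis using Rrep_power[OF Rrep_ah, of "nat n"] by (simp add: power_int_def)
next
  case False
  then show ?thesis using Rrep_power[OF Rrep_inv_ah, of "nat (-n)"] by (simp add: power_int_def)
qed

lemma Rrep_brg_qh: "Rrep (brg n qh) (\<lambda>x y. brg n x)"
  unfolding brg_def by (intro Rrep_diff Rrep_qh_powi)
lemma Rrep_brg_ah: "Rrep (brg n ah) (\<lambda>x y. brg n y)"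
  unfolding brg_def by (intro Rrep_diff Rrep_ah_powi)

lemma Rrep_gsum: "Rrep (gsum n (qh powi B)) (\<lambda>x y. gsum n (x powi B))"
  unfolding gsum_def power_int_mult[symmetric] by (intro Rrep_sum Rrep_qh_powi) simp

lemma Rrep_gs: "Rrep (gs r B qh) (\<lambda>x y. gs r B x)"
  unfolding gs_def by (cases "0 \<le> r") (simp_all add: Rrep_gsum Rrep_uminus)

lemma size_le_sum_mset_pos: "(\<forall>i\<in>#\<nu>. 0 < (i::nat)) \<Longrightarrow> size \<nu> \<le> sum_mset \<nu>"
  by (induction \<nu>) auto

lemma part_le_sum_mset: "(i::nat) \<in># \<nu> \<Longrightarrow> i \<le> sum_mset \<nu>"
  by (induction \<nu>) auto

lemma finite_partitions: "finite (partitions n)"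
proof -
  have "partitions n \<subseteq> (\<Union>k\<in>{..n}. multisets_of_size {..n} k)"
  proof
    fix \<nu> assume "\<nu> \<in> partitions n"
    then have p: "\<forall>i\<in>#\<nu>. 0 < i" "sum_mset \<nu> = n" by (auto simp: partitions_def)
    then have "size \<nu> \<le> n" using size_le_sum_mset_pos by metis
    moreover have "set_mset \<nu> \<subseteq> {..n}" using p part_le_sum_mset by fastforce
    ultimately show "\<nu> \<in> (\<Union>k\<in>{..n}. multisets_of_size {..n} k)" by (auto simp: multisets_of_size_def)
  qed
  then show ?thesis by (rule finite_subset) auto
qed

lemma m1_powi: "((-1::'a::field) powi k) = of_int ((-1) ^ nat \<bar>k\<bar>)"
  by (cases "0 \<le> k") (simp_all add: power_int_def)

definition cf :: "int \<Rightarrow> nat \<Rightarrow> nat \<Rightarrow> nat multiset \<Rightarrow> 'a::field" where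
  "cf \<tau> m d \<nu> = of_int (mobius d) * (-1) powi (int (m div d) * \<tau>) / of_nat (zee \<nu>)"

lemma Rrep_cf: "Rrep (cf \<tau> m d \<nu>) (\<lambda>x y. cf \<tau> m d \<nu>)"
proof -
  have "Rrep (of_int (mobius d * (-1) ^ nat \<bar>int (m div d) * \<tau>\<bar>) * (1 / of_nat (zee \<nu>)))
      (\<lambda>x y. of_int (mobius d * (-1) ^ nat \<bar>int (m div d) * \<tau>\<bar>) * (1 / of_nat (zee \<nu>)))"
    by (intro Rrep_mult Rrep_of_int Rrep_inv_of_nat)
  then show ?thesis unfolding cf_def m1_powi by simp
qed

definition Sx :: "int \<Rightarrow> nat \<Rightarrow> 'a::field \<Rightarrow> 'a \<Rightarrow> 'a" where
  "Sx \<tau> m x y = (\<Sum>d\<in>{d. d dvd m}. \<Sum>\<nu>\<in>partitions (m div d).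
      cf \<tau> m d \<nu> * (\<Prod>i\<in>#\<nu>. gs (int (m div d) * \<tau>) (int d * int i) x) *
      (\<Prod>i\<in>#\<nu>. brg (int d * int i) y))"

lemma Rrep_Sx: "m \<ge> 1 \<Longrightarrow> Rrep (Sx \<tau> m qh ah) (\<lambda>x y. Sx \<tau> m x y)"
  unfolding Sx_def
  by (intro Rrep_sum Rrep_mult Rrep_cf Rrep_prod_mset Rrep_gs Rrep_brg_ah finite_partitions) simp_all

lemma RHS_eq_Sx:
  fixes \<tau> :: int and m :: nat
  assumes "1 \<le> m"
  shows "(\<Sum>d\<in>{d. d dvd m}. \<Sum>\<nu>\<in>partitions (m div d).
              (of_int (mobius d) * (-1) powi (int (m div d) * \<tau>) / of_nat (zee \<nu>)) *
              (\<Prod>i\<in>#\<nu>. br (int m * int i * \<tau>) qh / br (int d * int i) qh) *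
              (\<Prod>i\<in>#\<nu>. br (int d * int i) ah)) = Sx \<tau> m qh ah"
  unfolding Sx_def cf_def br_brg
proof (intro sum.cong refl arg_cong2[where f="(*)"] arg_cong[where f=prod_mset] image_mset_cong)
  fix d \<nu> i assume d: "d \<in> {d. d dvd m}" and \<nu>: "\<nu> \<in> partitions (m div d)" and i: "i \<in># \<nu>"
  have ip: "i > 0" using \<nu> i by (auto simp: partitions_def)
  have dp: "d > 0" using d assms by (auto intro!: Nat.gr0I)
  have "int m = int (m div d) * int d" using d by (simp flip: of_nat_mult)
  then have e: "int m * int i * \<tau> = (int (m div d) * \<tau>) * (int d * int i)" by (simp add: mult_ac)
  have nz: "brg (int d * int i) qh \<noteq> 0" using ip dp by (intro brg_qh_nz) simp
  show "brg (int m * int i * \<tau>) qh / brg (int d * int i) qh = gs (int (m div d) * \<tau>) (int d * int i) qh"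
    unfolding e brg_gs[OF qh_nz, of "int (m div d) * \<tau>" "int d * int i"] using nz by simp
qed

lemma order_dvd_complex:
  fixes p q :: "complex poly"
  assumes "p \<noteq> 0" "q \<noteq> 0" "\<And>a. order a p \<le> order a q"
  shows "p dvd q"
  using assms
proof (induction "degree p" arbitrary: p q rule: less_induct)
  case less
  show ?case
  proof (cases "degree p = 0")
    case True
    then obtain c where "p = [:c:]" by (metis degree_eq_zeroE)
    with less.prems(1) have "c \<noteq> 0" by simp
    with \<open>p = [:c:]\<close> show ?thesis by (simp add: const_poly_dvd_iff dvd_field_iff)
  next
    case False
    then obtain a where a: "poly p a = 0"
      using fundamental_theorem_of_algebra[of p] constant_degree[of p] by auto
    then obtain p1 where p1: "p = [:-a, 1:] * p1" by (metis dvdE poly_eq_0_iff_dvd)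
    have "order a p \<noteq> 0" using a less.prems(1) order_root by blast
    then have "order a q \<noteq> 0" using less.prems(3)[of a] by simp
    then have "poly q a = 0" using order_root by blast
    then obtain q1 where q1: "q = [:-a, 1:] * q1" by (metis dvdE poly_eq_0_iff_dvd)
    have p1nz: "p1 \<noteq> 0" and q1nz: "q1 \<noteq> 0" using p1 q1 less.prems by auto
    have "degree p = Suc (degree p1)" using p1 p1nz degree_mult_eq[of "[:-a,1:]" p1] by simp
    then have dlt: "degree p1 < degree p" by simp
    have "order b p1 \<le> order b q1" for b
    proof -
      have "order b p = order b [:-a,1:] + order b p1" using p1 less.prems(1) order_mult by metis
      moreover have "order b q = order b [:-a,1:] + order b q1" using q1 less.prems(2) order_mult by metis
      ultimately show ?thesis using less.prems(3)[of b] by simp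
    qed
    then have "p1 dvd q1" using less.hyps[OF dlt p1nz q1nz] by blast
    then show ?thesis unfolding p1 q1 by (rule mult_dvd_mono[OF dvd_refl])
  qed
qed

lemma mq_inj_dvd:
  fixes F G :: "rat poly"
  assumes "F \<noteq> 0" "mq F dvd mq G"
  shows "F dvd G"
proof -
  define r where "r = G mod F"
  have "G = F * (G div F) + r" by (simp add: r_def)
  then have "mq G = mq F * mq (G div F) + mq r" by (metis mq_add mq_mult)
  then have "mq F dvd mq r" using assms(2) by (metis dvd_add_right_iff dvd_triv_left)
  have degmq: "degree (mq p) = degree p" for p
    unfolding mq_def by (rule degree_map_poly) simp
  have mq0: "mq p = 0 \<longleftrightarrow> p = 0" for p
    unfolding mq_def by (rule map_poly_eq_0_iff) simp_all
  have "r = 0"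
  proof (rule ccontr)
    assume "r \<noteq> 0"
    then have "degree r < degree F" using degree_mod_less[OF assms(1), of G] by (simp add: r_def)
    moreover have "degree (mq F) \<le> degree (mq r)"
      using \<open>mq F dvd mq r\<close> \<open>r \<noteq> 0\<close> mq0 by (intro dvd_imp_degree_le) auto
    ultimately show False by (simp add: degmq)
  qed
  then show ?thesis by (simp add: r_def mod_eq_0_iff_dvd)
qed

definition Pn :: "nat \<Rightarrow> rat poly" where "Pn n = (\<Sum>j<n. monom 1 (2 * j))"

lemma Pn_mult: "Pn n * (monom 1 2 - 1) = monom 1 (2 * n) - 1"
proof (induction n)
  case 0 then show ?case by (simp add: Pn_def)
next
  case (Suc n)
  have "Pn (Suc n) = Pn n + monom 1 (2 * n)" by (simp add: Pn_def)
  then have "Pn (Suc n) * (monom 1 2 - 1) = monom 1 (2 * n) - 1 + monom 1 (2 * n) * (monom 1 2 - 1)"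
    using Suc by (simp add: algebra_simps)
  also have "monom 1 (2 * n) * (monom 1 2 - 1) = monom (1::rat) (2 * Suc n) - monom 1 (2 * n)"
    by (simp add: algebra_simps mult_monom)
  finally show ?case by simp
qed


lemma geom2: "(\<Sum>j<n. (x::'a::comm_ring_1) ^ (2 * j)) * (x ^ 2 - 1) = x ^ (2 * n) - 1"
proof (induction n)
  case 0 then show ?case by simp
next
  case (Suc n)
  have "(\<Sum>j<Suc n. x ^ (2 * j)) * (x ^ 2 - 1) = (\<Sum>j<n. x ^ (2 * j)) * (x ^ 2 - 1) + x ^ (2 * n) * (x ^ 2 - 1)"
    by (simp add: algebra_simps)
  also have "\<dots> = x ^ (2 * n) * x ^ 2 - 1" using Suc.IH by (simp add: algebra_simps)
  also have "x ^ (2 * n) * x ^ 2 = x ^ (2 * Suc n)" by (simp add: power_add[symmetric])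
  finally show ?case .
qed

lemma poly_mq_Pn: "poly (mq (Pn n)) x = (\<Sum>j<n. x ^ (2 * j))"
proof -
  have "mq (Pn n) = (\<Sum>j<n. mq (monom 1 (2 * j)))"
    unfolding Pn_def by (rule sum_hom_gen) (simp_all add: mq_add)
  then show ?thesis by (simp add: poly_sum mq_def map_poly_monom poly_monom)
qed

lemma Pn_nz: "n \<ge> 1 \<Longrightarrow> mq (Pn n) \<noteq> 0"
proof
  assume "n \<ge> 1" "mq (Pn n) = 0"
  then have "poly (mq (Pn n)) 1 = 0" by simp
  then show False using \<open>n \<ge> 1\<close> by (simp add: poly_mq_Pn)
qed

lemma order_Pn_le1:
  assumes "n \<ge> 1"
  shows "order a (mq (Pn n)) \<le> 1"
proof -
  define G :: "complex poly" where "G = monom 1 (2 * n) - 1"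
  have pG: "poly G x = x ^ (2 * n) - 1" for x by (simp add: G_def poly_monom)
  have GG: "mq (Pn n) * [:-1, 0, 1:] = G"
  proof (rule poly_eq_poly_eq_iff[THEN iffD1], rule ext)
    fix x :: complex
    have "poly [:-1, 0, 1:] x = x ^ 2 - 1" by (simp add: power2_eq_square)
    then have "poly (mq (Pn n) * [:-1, 0, 1:]) x = (\<Sum>j<n. x ^ (2 * j)) * (x ^ 2 - 1)"
      by (simp only: poly_mult poly_mq_Pn)
    then show "poly (mq (Pn n) * [:-1, 0, 1:]) x = poly G x" by (simp only: geom2 pG)
  qed
  have Gnz: "G \<noteq> 0" using pG[of 0] assms by (auto simp: power_0_left)
  have le: "order a (mq (Pn n)) \<le> order a G"
    using GG Gnz order_mult[of "mq (Pn n)" "[:-1, 0, 1:]" a] by simp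
  show ?thesis
  proof (cases "poly G a = 0")
    case False
    then have "poly (mq (Pn n)) a \<noteq> 0" using GG by (metis mult_zero_left poly_mult)
    then show ?thesis by (simp add: order_0I)
  next
    case True
    then have an: "a \<noteq> 0" using pG[of a] assms by (auto simp: power_0_left)
    have dG: "pderiv G = monom (of_nat (2 * n)) (2 * n - 1)" by (simp add: G_def pderiv_monom pderiv_diff)
    have "poly (pderiv G) a \<noteq> 0" using an assms by (simp add: dG poly_monom)
    then have "order a (pderiv G) = 0" by (simp add: order_0I)
    then have "order a G = 1" using order_pderiv[OF Gnz True] by simp
    then show ?thesis using le by simp
  qed
qed

lemma ev_sum: "ev P x y = (\<Sum>j\<le>degree (mqq P). poly (coeff (mqq P) j) x * y ^ j)"
  unfolding ev_def
  by (subst poly_altdef) (simp add: poly_sum poly_const_pow mult.commute)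

lemma coeffs_zero_from_roots:
  fixes a :: "nat \<Rightarrow> complex"
  assumes "\<And>y. y \<noteq> 0 \<Longrightarrow> (\<Sum>j\<le>D. a j * y ^ j) = 0" "j \<le> D"
  shows "a j = 0"
proof -
  define E where "E = (\<Sum>j\<le>D. monom (a j) j)"
  have pE: "poly E y = (\<Sum>j\<le>D. a j * y ^ j)" for y by (simp add: E_def poly_sum poly_monom)
  have "E = 0"
  proof (rule ccontr)
    assume "E \<noteq> 0"
    then have "finite {y. poly E y = 0}" by (rule poly_roots_finite)
    moreover have "UNIV - {0} \<subseteq> {y. poly E y = 0}" using assms(1) pE by auto
    ultimately have "finite (UNIV - {0::complex})" by (rule finite_subset[rotated])
    then have "finite (UNIV :: complex set)" by simp
    then show False by (simp add: infinite_UNIV_char_0)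
  qed
  then have "coeff E j = 0" by simp
  moreover have "coeff E j = a j" using assms(2) by (simp add: E_def coeff_sum coeff_monom)
  ultimately show ?thesis by simp
qed

lemma coeff_vanish:
  assumes "\<And>y. y \<noteq> 0 \<Longrightarrow> ev P z y = 0"
  shows "poly (coeff (mqq P) j) z = 0"
proof (cases "j \<le> degree (mqq P)")
  case True
  show ?thesis
    by (rule coeffs_zero_from_roots[where a="\<lambda>j. poly (coeff (mqq P) j) z", OF _ True])
       (use assms in \<open>simp add: ev_sum\<close>)
next
  case False then show ?thesis by (simp add: coeff_eq_0)
qed

lemma deriv_vanish:
  assumes "\<And>y. y \<noteq> 0 \<Longrightarrow> ((\<lambda>x. ev P x y) has_field_derivative 0) (at z)"
  shows "poly (pderiv (coeff (mqq P) j)) z = 0"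
proof (cases "j \<le> degree (mqq P)")
  case True
  have "(\<Sum>j\<le>degree (mqq P). poly (pderiv (coeff (mqq P) j)) z * y ^ j) = 0" if "y \<noteq> 0" for y
  proof -
    have "((\<lambda>x. ev P x y) has_field_derivative (\<Sum>j\<le>degree (mqq P). poly (pderiv (coeff (mqq P) j)) z * y ^ j)) (at z)"
      unfolding ev_sum by (intro DERIV_sum DERIV_cmult_right) auto
    then show ?thesis using assms[OF that] DERIV_unique by blast
  qed
  then show ?thesis
    by (rule coeffs_zero_from_roots[where a="\<lambda>j. poly (pderiv (coeff (mqq P) j)) z", OF _ True])
next
  case False then show ?thesis by (simp add: coeff_eq_0)
qed


lemma Pn_root:
  assumes "n \<ge> 1" "poly (mq (Pn n)) a = 0"
  shows "a ^ (2 * n) = 1" "a ^ 2 \<noteq> 1"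
proof -
  have "(\<Sum>j<n. a ^ (2 * j)) * (a ^ 2 - 1) = a ^ (2 * n) - 1" by (rule geom2)
  then show "a ^ (2 * n) = 1" using assms by (simp add: poly_mq_Pn)
  show "a ^ 2 \<noteq> 1"
  proof
    assume a2: "a ^ 2 = 1"
    have "(\<Sum>j<n. a ^ (2 * j)) = (\<Sum>j<n. (a ^ 2) ^ j)" by (simp add: power_mult)
    also have "\<dots> = of_nat n" using a2 by simp
    finally show False using assms by (simp add: poly_mq_Pn)
  qed
qed

lemma order_ge2:
  fixes q :: "complex poly"
  assumes "q \<noteq> 0" "poly q a = 0" "poly (pderiv q) a = 0"
  shows "order a q \<ge> 2"
proof -
  have "pderiv q \<noteq> 0"
  proof
    assume "pderiv q = 0"
    then have "degree q = 0" using pderiv_eq_0_iff by blast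
    then obtain c where "q = [:c:]" by (metis degree_eq_zeroE)
    then show False using assms by simp
  qed
  then have "order a (pderiv q) \<noteq> 0" using assms(3) order_root by blast
  then show ?thesis using order_pderiv[OF assms(1,2)] by simp
qed

lemma coeff_mqq: "coeff (mqq P) j = mq (coeff P j)"
  by (simp add: mqq_def coeff_map_poly)

lemma main_poly_div:
  fixes P :: "rat poly poly" and m T :: nat
  assumes m1: "m \<ge> 1" and T1: "T \<ge> 1"
    and Z1: "\<And>z y. z ^ (2 * T) = 1 \<Longrightarrow> z ^ (2 * m) \<noteq> 1 \<Longrightarrow> y \<noteq> 0 \<Longrightarrow> ev P z y = 0"
    and Z2: "\<And>z y. z ^ (2 * m) = 1 \<Longrightarrow> z ^ 2 \<noteq> 1 \<Longrightarrow> y \<noteq> 0 \<Longrightarrow>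
               ev P z y = 0 \<and> ((\<lambda>x. ev P x y) has_field_derivative 0) (at z)"
  shows "P = smult (Pn m * Pn T) (map_poly (\<lambda>c. c div (Pn m * Pn T)) P)"
proof -
  define F where "F = Pn m * Pn T"
  have Fnz: "mq F \<noteq> 0" using Pn_nz[OF m1] Pn_nz[OF T1] by (simp add: F_def mq_mult)
  then have Fnz': "F \<noteq> 0" by auto
  have dvd: "F dvd coeff P j" for j
  proof (rule mq_inj_dvd[OF Fnz'])
    define q where "q = mq (coeff P j)"
    have q: "q = coeff (mqq P) j" by (simp add: q_def coeff_mqq)
    show "mq F dvd mq (coeff P j)"
    proof (cases "q = 0")
      case True then show ?thesis by (simp add: q_def)
    next
      case False
      have Z2': "order a q \<ge> 2" if "a ^ (2 * m) = 1" "a ^ 2 \<noteq> 1" for a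
      proof (rule order_ge2[OF False])
        show "poly q a = 0" unfolding q by (rule coeff_vanish) (use Z2[OF that] in blast)
        show "poly (pderiv q) a = 0" unfolding q by (rule deriv_vanish) (use Z2[OF that] in blast)
      qed
      have "order a (mq F) \<le> order a q" for a
      proof -
        have oF: "order a (mq F) = order a (mq (Pn m)) + order a (mq (Pn T))"
          using Fnz order_mult by (simp add: F_def mq_mult)
        have l1: "order a (mq (Pn m)) \<le> 1" "order a (mq (Pn T)) \<le> 1"
          using order_Pn_le1 m1 T1 by auto
        show ?thesis
        proof (cases "poly (mq (Pn m)) a = 0")
          case True
          then show ?thesis using Pn_root[OF m1 True] Z2' oF l1 by fastforce
        next
          case c1: False
          then have o1: "order a (mq (Pn m)) = 0" by (simp add: order_0I)
          show ?thesis
          proof (cases "poly (mq (Pn T)) a = 0")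
            case True
            note r = Pn_root[OF T1 True]
            show ?thesis
            proof (cases "a ^ (2 * m) = 1")
              case True then show ?thesis using Z2'[OF True r(2)] oF o1 l1 by simp
            next
              case False
              have "poly q a = 0" unfolding q by (rule coeff_vanish) (use Z1[OF r(1) False] in blast)
              then have "order a q \<noteq> 0" using \<open>q \<noteq> 0\<close> order_root by blast
              then show ?thesis using oF o1 l1 by simp
            qed
          next
            case False
            then show ?thesis using oF o1 by (simp add: order_0I)
          qed
        qed
      qed
      then show ?thesis using order_dvd_complex[OF Fnz False] by (simp add: q_def)
    qed
  qed
  show ?thesis
    by (simp add: poly_eq_iff coeff_map_poly F_def[symmetric] dvd[unfolded dvd_def])
       (metis F_def dvd dvd_mult_div_cancel)
qed

lemma powi_period:
  fixes z :: "'a::field"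
  assumes "z \<noteq> 0" "z powi (2 * B) = 1"
  shows "z powi (a + 2 * B * k) = z powi a"
proof -
  have "z powi (a + 2 * B * k) = z powi a * z powi (2 * B * k)" using assms(1) by (simp add: power_int_add)
  also have "z powi (2 * B * k) = (z powi (2 * B)) powi k" by (simp add: power_int_mult)
  finally show ?thesis using assms(2) by simp
qed

lemma sum_sym_zero: "(\<Sum>j<n. (int n - 1 - 2 * int j)) = 0"
proof (induction n)
  case 0 then show ?case by simp
next
  case (Suc n)
  have a: "(\<Sum>j<Suc n. (int (Suc n) - 1 - 2 * int j)) = (\<Sum>j<n. (int n - 2 * int j)) + (int n - 2 * int n)"
    by simp
  have b: "(\<Sum>j<n. (int n - 2 * int j)) = (\<Sum>j<n. (int n - 1 - 2 * int j) + 1)" by simp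
  have "(\<Sum>j<Suc n. (int (Suc n) - 1 - 2 * int j)) = (\<Sum>j<n. (int n - 1 - 2 * int j)) + int n + (int n - 2 * int n)"
    unfolding a b sum.distrib by simp
  then show ?case using Suc.IH by simp
qed

lemma gs_zero_bad:
  fixes z :: "'a::field"
  assumes "z \<noteq> 0" "z powi (2 * (r * B)) = 1" "z powi (2 * B) \<noteq> 1"
  shows "gs r B z = 0"
proof -
  have "brg (r * B) z = 0" using assms brg_eq_0_iff by blast
  moreover have "brg B z \<noteq> 0" using assms brg_eq_0_iff by blast
  ultimately show ?thesis using brg_gs[OF assms(1), of r B] by simp
qed

lemma gsum_at:
  fixes z :: "'a::field"
  assumes "z \<noteq> 0" "z powi (2 * B) = 1"
  shows "gsum n (z powi B) = of_nat n * z powi (B * (int n - 1))"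
proof -
  have "gsum n (z powi B) = (\<Sum>j<n. z powi (B * (int n - 1)))"
    unfolding gsum_def
  proof (rule sum.cong[OF refl])
    fix j
    have "(z powi B) powi (int n - 1 - 2 * int j) = z powi (B * (int n - 1) + 2 * B * (- int j))"
      by (simp add: power_int_mult[symmetric] algebra_simps)
    also have "\<dots> = z powi (B * (int n - 1))" by (rule powi_period[OF assms])
    finally show "(z powi B) powi (int n - 1 - 2 * int j) = z powi (B * (int n - 1))" .
  qed
  then show ?thesis by simp
qed

lemma gs_at:
  fixes z :: "'a::field"
  assumes "z \<noteq> 0" "z powi (2 * B) = 1"
  shows "gs r B z = of_int r * z powi (B * (\<bar>r\<bar> - 1))"
  using assms by (cases "0 \<le> r") (simp_all add: gs_def gsum_at)

lemma gsum_powi_expand: "gsum n (x powi B) = (\<Sum>j<n. x powi (B * (int n - 1 - 2 * int j)))"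
  unfolding gsum_def by (simp add: power_int_mult)

lemma gsum_deriv:
  fixes z :: complex
  assumes "z \<noteq> 0" "z powi (2 * B) = 1"
  shows "((\<lambda>x. gsum n (x powi B)) has_field_derivative 0) (at z)"
proof -
  have "((\<lambda>x. \<Sum>j<n. x powi (B * (int n - 1 - 2 * int j))) has_field_derivative
      (\<Sum>j<n. of_int (B * (int n - 1 - 2 * int j)) * z powi (B * (int n - 1 - 2 * int j) - 1) * 1)) (at z)"
    by (intro DERIV_sum DERIV_power_int DERIV_ident) (use assms in simp)
  moreover have "(\<Sum>j<n. of_int (B * (int n - 1 - 2 * int j)) * z powi (B * (int n - 1 - 2 * int j) - 1) * 1)
      = (\<Sum>j<n. of_int B * z powi (B * (int n - 1) - 1) * of_int (int n - 1 - 2 * int j))"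
  proof (rule sum.cong[OF refl])
    fix j
    have "z powi (B * (int n - 1 - 2 * int j) - 1) = z powi ((B * (int n - 1) - 1) + 2 * B * (- int j))"
      by (simp add: algebra_simps)
    also have "\<dots> = z powi (B * (int n - 1) - 1)" by (rule powi_period[OF assms])
    finally show "of_int (B * (int n - 1 - 2 * int j)) * z powi (B * (int n - 1 - 2 * int j) - 1) * 1
      = of_int B * z powi (B * (int n - 1) - 1) * of_int (int n - 1 - 2 * int j)"
      by simp
  qed
  moreover have "\<dots> = of_int B * z powi (B * (int n - 1) - 1) * of_int (\<Sum>j<n. (int n - 1 - 2 * int j))"
    by (simp add: sum_distrib_left)
  ultimately show ?thesis unfolding gsum_powi_expand by (simp add: sum_sym_zero)
qed

lemma gs_deriv:
  fixes z :: complex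
  assumes "z \<noteq> 0" "z powi (2 * B) = 1"
  shows "((\<lambda>x. gs r B x) has_field_derivative 0) (at z)"
proof (cases "0 \<le> r")
  case True
  then show ?thesis unfolding gs_def using gsum_deriv[OF assms] by simp
next
  case False
  then show ?thesis unfolding gs_def using DERIV_minus[OF gsum_deriv[OF assms]] by simp
qed


lemma prod_mset_zero_if:
  fixes f :: "nat \<Rightarrow> 'a::idom"
  assumes "i \<in># M" "f i = 0"
  shows "(\<Prod>j\<in>#M. f j) = 0"
  using assms by (induction M) auto

lemma DERIV_prod_mset_gen:
  fixes f :: "nat \<Rightarrow> complex \<Rightarrow> complex"
  assumes "\<And>i. i \<in># M \<Longrightarrow> (f i has_field_derivative f' i) (at z)"
  shows "\<exists>D. ((\<lambda>x. \<Prod>i\<in>#M. f i x) has_field_derivative D) (at z) \<and>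
           ((\<forall>i\<in>#M. f' i = 0) \<longrightarrow> D = 0) \<and>
           (2 \<le> size (filter_mset (\<lambda>i. f i z = 0) M) \<longrightarrow> D = 0)"
  using assms
proof (induction M)
  case empty
  show ?case by (intro exI[of _ 0]) simp
next
  case (add a M)
  obtain D where D: "((\<lambda>x. \<Prod>i\<in>#M. f i x) has_field_derivative D) (at z)"
     "(\<forall>i\<in>#M. f' i = 0) \<longrightarrow> D = 0"
     "2 \<le> size (filter_mset (\<lambda>i. f i z = 0) M) \<longrightarrow> D = 0"
    using add by auto
  have fa: "(f a has_field_derivative f' a) (at z)" using add.prems by simp
  define D' where "D' = f' a * (\<Prod>i\<in>#M. f i z) + D * f a z"
  have "((\<lambda>x. f a x * (\<Prod>i\<in>#M. f i x)) has_field_derivative D') (at z)"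
    unfolding D'_def by (rule DERIV_mult[OF fa D(1)])
  moreover have "(\<forall>i\<in>#add_mset a M. f' i = 0) \<longrightarrow> D' = 0" using D(2) by (simp add: D'_def)
  moreover have "2 \<le> size (filter_mset (\<lambda>i. f i z = 0) (add_mset a M)) \<longrightarrow> D' = 0"
  proof
    assume h: "2 \<le> size (filter_mset (\<lambda>i. f i z = 0) (add_mset a M))"
    show "D' = 0"
    proof (cases "f a z = 0")
      case True
      with h have "1 \<le> size (filter_mset (\<lambda>i. f i z = 0) M)" by simp
      then obtain i where "i \<in># filter_mset (\<lambda>i. f i z = 0) M"
        by (metis One_nat_def Suc_le_eq multiset_nonemptyE size_empty less_irrefl)
      then have "(\<Prod>i\<in>#M. f i z) = 0" by (intro prod_mset_zero_if[of i]) auto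
      then show ?thesis using True by (simp add: D'_def)
    next
      case False
      with h have h2: "2 \<le> size (filter_mset (\<lambda>i. f i z = 0) M)" by simp
      then obtain i where "i \<in># filter_mset (\<lambda>i. f i z = 0) M"
        by (metis multiset_nonemptyE size_empty not_numeral_le_zero)
      then have "(\<Prod>i\<in>#M. f i z) = 0" by (intro prod_mset_zero_if[of i]) auto
      then show ?thesis using D(3) h2 by (simp add: D'_def)
    qed
  qed
  ultimately show ?case by (intro exI[of _ D']) simp
qed


lemma gs_has_deriv:
  fixes z :: complex
  assumes "z \<noteq> 0"
  shows "\<exists>D. ((\<lambda>x. gs r B x) has_field_derivative D) (at z)"
proof -
  have g: "\<exists>D. ((\<lambda>x. gsum n (x powi B)) has_field_derivative D) (at z)" for n
  proof -
    have "((\<lambda>x. \<Sum>j<n. x powi (B * (int n - 1 - 2 * int j))) has_field_derivative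
        (\<Sum>j<n. of_int (B * (int n - 1 - 2 * int j)) * z powi (B * (int n - 1 - 2 * int j) - 1) * 1)) (at z)"
      by (intro DERIV_sum DERIV_power_int DERIV_ident) (use assms in simp)
    then show ?thesis unfolding gsum_powi_expand by blast
  qed
  show ?thesis
  proof (cases "0 \<le> r")
    case True then show ?thesis unfolding gs_def using g by simp
  next
    case False
    obtain D where "((\<lambda>x. gsum (nat (- r)) (x powi B)) has_field_derivative D) (at z)" using g by blast
    from DERIV_minus[OF this] show ?thesis unfolding gs_def using False by auto
  qed
qed

lemma prod_mset_powi:
  fixes z :: "'a::field"
  assumes "z \<noteq> 0"
  shows "(\<Prod>i\<in>#\<nu>. z powi (a * int i)) = z powi (a * int (sum_mset \<nu>))"
  using assms by (induction \<nu>) (simp_all add: power_int_add algebra_simps)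

lemma prod_mset_pow_nat:
  fixes w :: "'a::comm_monoid_mult"
  shows "(\<Prod>i\<in>#\<nu>. w ^ i) = w ^ (sum_mset \<nu>)"
  by (induction \<nu>) (simp_all add: power_add)

lemma powi_2di: "(z::'a::field) powi (2 * (int d * int i)) = z ^ (2 * d * i)"
proof -
  have "2 * (int d * int i) = int (2 * d * i)" by simp
  then show ?thesis by (simp only: power_int_of_nat)
qed

context
  fixes \<tau> :: int and m :: nat and \<zeta> :: complex
  assumes m1: "m \<ge> 1" and znz: "\<zeta> \<noteq> 0" and HT: "\<zeta> powi (2 * (int m * \<tau>)) = 1"
begin

lemma num_zero:
  assumes "d dvd m"
  shows "\<zeta> powi (2 * ((int (m div d) * \<tau>) * (int d * int i))) = 1"
proof -
  have "int (m div d) * int d = int m" using assms by (simp flip: of_nat_mult)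
  then have e: "2 * ((int (m div d) * \<tau>) * (int d * int i)) = (2 * (int m * \<tau>)) * int i"
    by (metis mult.assoc mult.left_commute)
  show ?thesis unfolding e by (subst power_int_mult, subst HT, simp)
qed

lemma gs_bad:
  assumes "d dvd m" "\<zeta> ^ (2 * d * i) \<noteq> 1"
  shows "gs (int (m div d) * \<tau>) (int d * int i) \<zeta> = 0"
  by (rule gs_zero_bad[OF znz num_zero[OF assms(1)]]) (use assms(2) in \<open>simp add: powi_2di\<close>)

lemma gs_good_val:
  assumes "\<zeta> ^ (2 * d * i) = 1"
  shows "gs r (int d * int i) \<zeta> = of_int r * \<zeta> powi ((int d * (\<bar>r\<bar> - 1)) * int i)"
proof -
  have c: "\<zeta> powi (2 * (int d * int i)) = 1" using assms by (simp only: powi_2di)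
  show ?thesis using gs_at[OF znz c, of r] by (simp add: mult_ac)
qed

lemma gs_good_deriv:
  assumes "\<zeta> ^ (2 * d * i) = 1"
  shows "((\<lambda>x. gs r (int d * int i) x) has_field_derivative 0) (at \<zeta>)"
proof -
  have c: "\<zeta> powi (2 * (int d * int i)) = 1" using assms by (simp only: powi_2di)
  show ?thesis using gs_deriv[OF znz c, of r] by simp
qed

definition good :: "nat \<Rightarrow> nat multiset \<Rightarrow> bool" where
  "good d \<nu> \<longleftrightarrow> (\<forall>i\<in>#\<nu>. \<zeta> ^ (2 * d * i) = 1)"

lemma good_sum:
  assumes "d dvd m" "sum_mset \<nu> = m div d"
  shows "(\<Prod>i\<in>#\<nu>. (\<zeta> ^ (2 * d)) ^ i) = \<zeta> ^ (2 * m)"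
proof -
  have "(\<Prod>i\<in>#\<nu>. (\<zeta> ^ (2 * d)) ^ i) = \<zeta> ^ (2 * d * (m div d))"
    by (simp add: prod_mset_pow_nat assms(2) power_mult)
  also have "2 * d * (m div d) = 2 * m" using assms(1) by simp
  finally show ?thesis .
qed

lemma prod_good_val:
  assumes "d dvd m" "\<nu> \<in> partitions (m div d)" "good d \<nu>"
  shows "(\<Prod>i\<in>#\<nu>. gs r (int d * int i) \<zeta>) = of_int r ^ size \<nu> * \<zeta> powi ((\<bar>r\<bar> - 1) * int m)"
proof -
  have "(\<Prod>i\<in>#\<nu>. gs r (int d * int i) \<zeta>) = (\<Prod>i\<in>#\<nu>. of_int r * \<zeta> powi ((int d * (\<bar>r\<bar> - 1)) * int i))"
    using assms(3) unfolding good_def by (intro arg_cong[where f=prod_mset] image_mset_cong gs_good_val) auto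
  also have "\<dots> = of_int r ^ size \<nu> * (\<Prod>i\<in>#\<nu>. \<zeta> powi ((int d * (\<bar>r\<bar> - 1)) * int i))"
    by (simp add: prod_mset.distrib)
  also have "(\<Prod>i\<in>#\<nu>. \<zeta> powi ((int d * (\<bar>r\<bar> - 1)) * int i)) = \<zeta> powi ((int d * (\<bar>r\<bar> - 1)) * int (m div d))"
  proof -
    have sn: "sum_mset \<nu> = m div d" using assms(2) by (simp add: partitions_def)
    show ?thesis by (simp only: prod_mset_powi[OF znz] sn)
  qed
  also have "(int d * (\<bar>r\<bar> - 1)) * int (m div d) = (\<bar>r\<bar> - 1) * int m"
    using assms(1) by (simp flip: of_nat_mult add: mult_ac)
  finally show ?thesis .
qed

lemma not_good_Z1:
  assumes "d dvd m" "\<nu> \<in> partitions (m div d)" "\<zeta> ^ (2 * m) \<noteq> 1"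
  shows "\<not> good d \<nu>"
proof
  assume "good d \<nu>"
  then have "(\<Prod>i\<in>#\<nu>. (\<zeta> ^ (2 * d)) ^ i) = 1"
    unfolding good_def by (intro prod_mset.neutral) (auto simp: power_mult)
  then show False using good_sum[OF assms(1)] assms(2,3) by (simp add: partitions_def)
qed

lemma prod_not_good:
  assumes "d dvd m" "\<not> good d \<nu>"
  shows "(\<Prod>i\<in>#\<nu>. gs (int (m div d) * \<tau>) (int d * int i) \<zeta>) = 0"
proof -
  obtain i where i: "i \<in># \<nu>" "\<zeta> ^ (2 * d * i) \<noteq> 1" using assms(2) unfolding good_def by blast
  show ?thesis by (rule prod_mset_zero_if[OF i(1)]) (rule gs_bad[OF assms(1) i(2)])
qed

lemma bad_count:
  assumes "d dvd m" "\<nu> \<in> partitions (m div d)" "\<zeta> ^ (2 * m) = 1"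
  shows "size (filter_mset (\<lambda>i. \<zeta> ^ (2 * d * i) \<noteq> 1) \<nu>) \<noteq> 1"
proof
  assume "size (filter_mset (\<lambda>i. \<zeta> ^ (2 * d * i) \<noteq> 1) \<nu>) = 1"
  then obtain b where b: "filter_mset (\<lambda>i. \<zeta> ^ (2 * d * i) \<noteq> 1) \<nu> = {#b#}"
    using size_1_singleton_mset by blast
  have "b \<in># filter_mset (\<lambda>i. \<zeta> ^ (2 * d * i) \<noteq> 1) \<nu>" by (simp add: b)
  then have bb: "\<zeta> ^ (2 * d * b) \<noteq> 1" by simp
  have split: "\<nu> = filter_mset (\<lambda>i. \<zeta> ^ (2 * d * i) \<noteq> 1) \<nu> + filter_mset (\<lambda>i. \<not> \<zeta> ^ (2 * d * i) \<noteq> 1) \<nu>"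
    by (rule multiset_partition)
  have "(\<Prod>i\<in>#filter_mset (\<lambda>i. \<not> \<zeta> ^ (2 * d * i) \<noteq> 1) \<nu>. (\<zeta> ^ (2 * d)) ^ i) = 1"
    by (intro prod_mset.neutral) (auto simp: power_mult)
  then have "(\<Prod>i\<in>#\<nu>. (\<zeta> ^ (2 * d)) ^ i) = (\<zeta> ^ (2 * d)) ^ b"
    by (subst split) (simp add: b)
  then have "\<zeta> ^ (2 * d * b) = 1" using good_sum[OF assms(1)] assms(2,3) by (simp add: partitions_def power_mult)
  then show False using bb by simp
qed

lemma prod_deriv_zero:
  assumes "d dvd m" "\<nu> \<in> partitions (m div d)" "\<zeta> ^ (2 * m) = 1"
  shows "((\<lambda>x. \<Prod>i\<in>#\<nu>. gs (int (m div d) * \<tau>) (int d * int i) x) has_field_derivative 0) (at \<zeta>)"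
proof -
  define r where "r = int (m div d) * \<tau>"
  define f' where "f' i = (if \<zeta> ^ (2 * d * i) = 1 then 0 else (SOME D. ((\<lambda>x. gs r (int d * int i) x) has_field_derivative D) (at \<zeta>)))" for i
  have fd: "((\<lambda>x. gs r (int d * int i) x) has_field_derivative f' i) (at \<zeta>)" for i
  proof (cases "\<zeta> ^ (2 * d * i) = 1")
    case True then show ?thesis using gs_good_deriv[OF True] by (simp add: f'_def)
  next
    case False then show ?thesis unfolding f'_def using someI_ex[OF gs_has_deriv[OF znz]] by simp
  qed
  obtain D where D: "((\<lambda>x. \<Prod>i\<in>#\<nu>. gs r (int d * int i) x) has_field_derivative D) (at \<zeta>)"
    "(\<forall>i\<in>#\<nu>. f' i = 0) \<longrightarrow> D = 0"
    "2 \<le> size (filter_mset (\<lambda>i. gs r (int d * int i) \<zeta> = 0) \<nu>) \<longrightarrow> D = 0"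
    using DERIV_prod_mset_gen[of \<nu> "\<lambda>i x. gs r (int d * int i) x" f' \<zeta>] fd by blast
  have "D = 0"
  proof (cases "good d \<nu>")
    case True
    then show ?thesis using D(2) unfolding good_def f'_def by simp
  next
    case False
    have sub: "filter_mset (\<lambda>i. \<zeta> ^ (2 * d * i) \<noteq> 1) \<nu> \<subseteq># filter_mset (\<lambda>i. gs r (int d * int i) \<zeta> = 0) \<nu>"
      by (rule filter_mset_mono_strong) (use gs_bad[OF assms(1)] r_def in auto)
    obtain i where "i \<in># \<nu>" "\<zeta> ^ (2 * d * i) \<noteq> 1" using False unfolding good_def by blast
    then have "i \<in># filter_mset (\<lambda>i. \<zeta> ^ (2 * d * i) \<noteq> 1) \<nu>" by simp
    then have "size (filter_mset (\<lambda>i. \<zeta> ^ (2 * d * i) \<noteq> 1) \<nu>) \<noteq> 0"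
      by (metis empty_iff set_mset_empty size_eq_0_iff_empty)
    with bad_count[OF assms] have "2 \<le> size (filter_mset (\<lambda>i. \<zeta> ^ (2 * d * i) \<noteq> 1) \<nu>)" by linarith
    then have "2 \<le> size (filter_mset (\<lambda>i. gs r (int d * int i) \<zeta> = 0) \<nu>)"
      using size_mset_mono[OF sub] by linarith
    then show ?thesis using D(3) by simp
  qed
  then show ?thesis using D(1) r_def by simp
qed

end


lemma mobius_mult_prime:
  fixes d p :: nat
  assumes "d > 0" "prime p" "\<not> p dvd d"
  shows "mobius (d * p) = - mobius d"
proof -
  have cop: "coprime d p" using prime_imp_coprime[OF assms(2,3)] by (simp add: coprime_commute)
  have sq: "squarefree (d * p) \<longleftrightarrow> squarefree d"
    using squarefree_multD(1)[of d p] squarefree_mult_coprime[OF cop _ squarefree_prime[OF assms(2)]] by blast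
  have pf: "prime_factors (d * p) = insert p (prime_factors d)"
    using assms prime_factors_product[of d p] prime_prime_factors[OF assms(2)] by auto
  have "p \<notin> prime_factors d" using assms(3) by (simp add: in_prime_factors_iff)
  then have "card (prime_factors (d * p)) = Suc (card (prime_factors d))" by (simp add: pf)
  then show ?thesis unfolding mobius_def sq by simp
qed

lemma mobius_sq_zero:
  fixes d p :: nat
  assumes "prime p" "p ^ 2 dvd d"
  shows "mobius d = 0"
proof -
  have "\<not> p dvd 1" using prime_gt_1_nat[OF assms(1)] by simp
  then have "\<not> squarefree d" using not_squarefreeI[OF assms(2)] by blast
  then show ?thesis by (simp add: mobius_def)
qed

lemma mobius_pair:
  fixes X :: "nat \<Rightarrow> 'a::comm_ring_1"
  assumes m0: "m > 0" and p: "prime p" "p dvd m"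
    and X: "\<And>d. d dvd m \<Longrightarrow> squarefree d \<Longrightarrow> \<not> p dvd d \<Longrightarrow> X d = X (d * p)"
  shows "(\<Sum>d\<in>{d. d dvd m}. of_int (mobius d) * X d) = 0"
proof -
  define A where "A = {d. d dvd m \<and> \<not> p dvd d}"
  define B where "B = {d. d dvd m \<and> p dvd d}"
  have fin: "finite {d. d dvd m}" using m0 by simp
  have AB: "{d. d dvd m} = A \<union> B" "A \<inter> B = {}" by (auto simp: A_def B_def)
  have finA: "finite A" "finite B" using fin by (auto simp: A_def B_def intro: finite_subset)
  have img: "(\<lambda>d. d * p) ` A \<subseteq> B"
  proof
    fix x assume "x \<in> (\<lambda>d. d * p) ` A"
    then obtain d where d: "d dvd m" "\<not> p dvd d" "x = d * p" by (auto simp: A_def)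
    have "coprime d p" using prime_imp_coprime[OF p(1) d(2)] by (simp add: coprime_commute)
    then have "d * p dvd m" using d(1) p(2) by (simp add: divides_mult)
    then show "x \<in> B" using d by (simp add: B_def)
  qed
  have sumB: "(\<Sum>d\<in>B. of_int (mobius d) * X d) = (\<Sum>d\<in>(\<lambda>d. d * p) ` A. of_int (mobius d) * X d)"
  proof (rule sum.mono_neutral_right[OF finA(2) img])
    show "\<forall>i\<in>B - (\<lambda>d. d * p) ` A. of_int (mobius i) * X i = 0"
    proof
      fix x assume x: "x \<in> B - (\<lambda>d. d * p) ` A"
      then have xB: "x dvd m" "p dvd x" by (auto simp: B_def)
      then obtain d' where "x = p * d'" by (elim dvdE)
      then have d': "x = d' * p" "x dvd m" using xB by (simp_all add: mult.commute)
      have "d' dvd m" using d' by (metis dvd_mult_left)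
      then have "p dvd d'" using x d' by (auto simp: A_def)
      then have "p ^ 2 dvd x" using d' by (auto simp: power2_eq_square)
      then show "of_int (mobius x) * X x = 0" using mobius_sq_zero[OF p(1)] by simp
    qed
  qed
  have inj: "inj_on (\<lambda>d. d * p) A" using p(1) by (auto simp: inj_on_def prime_gt_0_nat)
  have "(\<Sum>d\<in>{d. d dvd m}. of_int (mobius d) * X d) =
      (\<Sum>d\<in>A. of_int (mobius d) * X d) + (\<Sum>d\<in>A. of_int (mobius (d * p)) * X (d * p))"
    unfolding AB(1) sum.union_disjoint[OF finA AB(2)] sumB sum.reindex[OF inj] by (simp add: o_def)
  also have "\<dots> = (\<Sum>d\<in>A. of_int (mobius d) * X d + of_int (mobius (d * p)) * X (d * p))"
    by (simp add: sum.distrib)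
  also have "\<dots> = (\<Sum>d\<in>A. 0)"
  proof (rule sum.cong[OF refl])
    fix d assume d: "d \<in> A"
    then have d0: "d > 0" using m0 by (auto simp: A_def intro: Nat.gr0I)
    have mu: "mobius (d * p) = - mobius d" using mobius_mult_prime[OF d0 p(1)] d by (simp add: A_def)
    show "of_int (mobius d) * X d + of_int (mobius (d * p)) * X (d * p) = 0"
    proof (cases "squarefree d")
      case True
      then have "X d = X (d * p)" using X d by (auto simp: A_def)
      then show ?thesis by (simp add: mu)
    next
      case False
      then have "mobius d = 0" by (simp add: mobius_def)
      then show ?thesis by (simp add: mu)
    qed
  qed
  finally show ?thesis by simp
qed

lemma zee_scale:
  fixes p :: nat
  assumes "p > 0"
  shows "zee (image_mset ((*) p) \<nu>) = p ^ size \<nu> * zee \<nu>"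
proof -
  have inj: "inj ((*) p)" using assms by (auto simp: inj_def)
  have cnt: "count (image_mset ((*) p) \<nu>) (p * j) = count \<nu> j" for j
  proof -
    have pre: "(*) p -` {p * j} = {j}" using assms by auto
    show ?thesis by (simp add: count_image_mset pre) (auto simp: Int_insert_left not_in_iff)
  qed
  have "zee (image_mset ((*) p) \<nu>) = (\<Prod>j\<in>(*) p ` set_mset \<nu>. j ^ count (image_mset ((*) p) \<nu>) j * fact (count (image_mset ((*) p) \<nu>) j))"
    by (simp add: zee_def)
  also have "\<dots> = (\<Prod>j\<in>set_mset \<nu>. (p * j) ^ count \<nu> j * fact (count \<nu> j))"
    by (subst prod.reindex) (use inj in \<open>auto simp: inj_on_def cnt\<close>)
  also have "\<dots> = (\<Prod>j\<in>set_mset \<nu>. p ^ count \<nu> j) * zee \<nu>"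
    by (simp add: zee_def power_mult_distrib prod.distrib mult.assoc)
  also have "(\<Prod>j\<in>set_mset \<nu>. p ^ count \<nu> j) = p ^ size \<nu>"
    by (simp add: power_sum size_multiset_overloaded_eq)
  finally show ?thesis .
qed

lemma image_mset_mult_inj:
  fixes p :: nat
  assumes "p > 0"
  shows "inj (image_mset ((*) p))"
proof (rule injI)
  fix A B assume "image_mset ((*) p) A = image_mset ((*) p) B"
  then have "image_mset (\<lambda>i. i div p) (image_mset ((*) p) A) = image_mset (\<lambda>i. i div p) (image_mset ((*) p) B)" by simp
  then show "A = B" using assms by (simp add: image_mset.compositionality o_def)
qed

lemma partitions_scale:
  fixes p n :: nat
  assumes "p > 0"
  shows "{\<nu> \<in> partitions (p * n). \<forall>i\<in>#\<nu>. p dvd i} = image_mset ((*) p) ` partitions n"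
proof (intro equalityI subsetI)
  fix \<nu> assume "\<nu> \<in> {\<nu> \<in> partitions (p * n). \<forall>i\<in>#\<nu>. p dvd i}"
  then have h: "\<forall>i\<in>#\<nu>. 0 < i" "sum_mset \<nu> = p * n" "\<forall>i\<in>#\<nu>. p dvd i" by (auto simp: partitions_def)
  define \<mu> where "\<mu> = image_mset (\<lambda>i. i div p) \<nu>"
  have e: "image_mset ((*) p) \<mu> = \<nu>"
    unfolding \<mu>_def image_mset.compositionality o_def using h(3)
    by (subst image_mset_cong[where g="\<lambda>x. x"]) auto
  have "sum_mset (image_mset ((*) p) \<mu>) = p * sum_mset \<mu>" using sum_mset_distrib_left[of p "\<lambda>x. x" \<mu>] by simp
  then have "sum_mset \<mu> = n" using e h(2) assms by simp
  moreover have "\<forall>i\<in>#\<mu>. 0 < i"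
  proof
    fix i assume "i \<in># \<mu>"
    then obtain x where x: "x \<in># \<nu>" "i = x div p" by (auto simp: \<mu>_def)
    then have "0 < x" "p dvd x" using h by auto
    then show "0 < i" using x(2) assms by (auto elim!: dvdE)
  qed
  ultimately have "\<mu> \<in> partitions n" by (simp add: partitions_def)
  then show "\<nu> \<in> image_mset ((*) p) ` partitions n" using e by blast
next
  fix \<nu> assume "\<nu> \<in> image_mset ((*) p) ` partitions n"
  then obtain \<mu> where \<mu>: "\<mu> \<in> partitions n" "\<nu> = image_mset ((*) p) \<mu>" by blast
  then show "\<nu> \<in> {\<nu> \<in> partitions (p * n). \<forall>i\<in>#\<nu>. p dvd i}"
    using assms sum_mset_distrib_left[of p "\<lambda>x. x" \<mu>] by (auto simp: partitions_def)
qed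


lemma HT_from: "(\<zeta>::complex) ^ (2 * m) = 1 \<Longrightarrow> \<zeta> powi (2 * (int m * \<tau>)) = 1"
proof -
  assume h: "\<zeta> ^ (2 * m) = 1"
  have "\<zeta> powi (2 * (int m * \<tau>)) = (\<zeta> powi (int (2 * m))) powi \<tau>"
    by (simp add: power_int_mult mult.assoc)
  also have "\<zeta> powi (int (2 * m)) = 1" using h by (simp only: power_int_of_nat)
  finally show ?thesis by simp
qed

lemma Sx_Z1:
  fixes \<zeta> :: complex
  assumes m1: "m \<ge> 1" and znz: "\<zeta> \<noteq> 0" and HT: "\<zeta> powi (2 * (int m * \<tau>)) = 1" and z: "\<zeta> ^ (2 * m) \<noteq> 1"
  shows "Sx \<tau> m \<zeta> y = 0"
  unfolding Sx_def
proof (intro sum.neutral ballI)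
  fix d \<nu> assume d: "d \<in> {d. d dvd m}" and \<nu>: "\<nu> \<in> partitions (m div d)"
  have "(\<Prod>i\<in>#\<nu>. gs (int (m div d) * \<tau>) (int d * int i) \<zeta>) = 0"
    using prod_not_good[OF m1 znz HT _ not_good_Z1[OF m1 znz HT _ \<nu> z]] d by simp
  then show "cf \<tau> m d \<nu> * (\<Prod>i\<in>#\<nu>. gs (int (m div d) * \<tau>) (int d * int i) \<zeta>) * (\<Prod>i\<in>#\<nu>. brg (int d * int i) y) = 0"
    by simp
qed

lemma Sx_deriv:
  fixes \<zeta> :: complex
  assumes m1: "m \<ge> 1" and znz: "\<zeta> \<noteq> 0" and z: "\<zeta> ^ (2 * m) = 1"
  shows "((\<lambda>x. Sx \<tau> m x y) has_field_derivative 0) (at \<zeta>)"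
proof -
  note HT = HT_from[OF z, of \<tau>]
  have "((\<lambda>x. Sx \<tau> m x y) has_field_derivative
     (\<Sum>d\<in>{d. d dvd m}. \<Sum>\<nu>\<in>partitions (m div d). cf \<tau> m d \<nu> * 0 * (\<Prod>i\<in>#\<nu>. brg (int d * int i) y))) (at \<zeta>)"
    unfolding Sx_def
    by (intro DERIV_sum DERIV_cmult_right DERIV_cmult prod_deriv_zero[OF m1 znz HT _ _ z]) auto
  then show ?thesis by simp
qed

lemma m1pow: "((-1::complex) powi k) = (if even k then 1 else -1)"
proof (cases "0 \<le> k")
  case True
  then show ?thesis by (simp add: power_int_def even_nat_iff)
next
  case False
  then have "even (nat (- k)) \<longleftrightarrow> even k" by (simp add: even_nat_iff)
  then show ?thesis using False by (simp add: power_int_def)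
qed

lemma sign_eq:
  fixes \<zeta> \<sigma> :: complex
  assumes "\<zeta> ^ m = \<sigma>" "\<sigma> = 1 \<or> \<sigma> = -1" "r = int p * r'" "odd p \<or> \<sigma> = -1 \<or> even r'"
  shows "(-1) powi r * \<zeta> powi ((\<bar>r\<bar> - 1) * int m) = (-1) powi r' * \<zeta> powi ((\<bar>r'\<bar> - 1) * int m)"
proof -
  have zs: "\<zeta> powi ((\<bar>k\<bar> - 1) * int m) = \<sigma> powi (\<bar>k\<bar> - 1)" for k
    using assms(1) by (simp add: power_int_mult mult.commute[of _ "int m"])
  have ev: "even (\<bar>k\<bar> - 1) \<longleftrightarrow> odd k" for k :: int by auto
  show ?thesis
  proof (cases "\<sigma> = -1")
    case True
    then show ?thesis unfolding zs using ev by (simp add: m1pow)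
  next
    case False
    then have s1: "\<sigma> = 1" using assms(2) by simp
    have "even r \<longleftrightarrow> even r'"
    proof (cases "odd p")
      case True then show ?thesis using assms(3) by simp
    next
      case False then have "even r'" using assms(4) s1 by simp
      then show ?thesis using assms(3) by simp
    qed
    then show ?thesis unfolding zs s1 by (simp add: m1pow)
  qed
qed


lemma order_props:
  fixes \<zeta> :: complex
  assumes m1: "m \<ge> 1" and z: "\<zeta> ^ (2 * m) = 1" and z2: "\<zeta> ^ 2 \<noteq> 1"
  obtains e where "e > 1" "\<And>n. \<zeta> ^ (2 * n) = 1 \<longleftrightarrow> e dvd n"
proof -
  define e where "e = (LEAST k. 0 < k \<and> \<zeta> ^ (2 * k) = 1)"
  have ex: "0 < m \<and> \<zeta> ^ (2 * m) = 1" using m1 z by simp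
  have e: "0 < e" "\<zeta> ^ (2 * e) = 1" using LeastI[of "\<lambda>k. 0 < k \<and> \<zeta> ^ (2 * k) = 1", OF ex] by (auto simp: e_def)
  have char: "\<zeta> ^ (2 * n) = 1 \<longleftrightarrow> e dvd n" for n
  proof
    assume h: "\<zeta> ^ (2 * n) = 1"
    have "\<zeta> ^ (2 * n) = (\<zeta> ^ (2 * e)) ^ (n div e) * \<zeta> ^ (2 * (n mod e))"
      by (metis div_mult_mod_eq power_add power_mult add_mult_distrib2 mult.assoc mult.commute)
    then have "\<zeta> ^ (2 * (n mod e)) = 1" using h e by simp
    moreover have "n mod e < e" using e by simp
    ultimately have "\<not> 0 < n mod e"
      using not_less_Least[of "n mod e" "\<lambda>k. 0 < k \<and> \<zeta> ^ (2 * k) = 1"] by (auto simp: e_def)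
    then show "e dvd n" by (simp add: mod_eq_0_iff_dvd)
  next
    assume "e dvd n"
    then obtain q where "n = e * q" by (elim dvdE)
    then show "\<zeta> ^ (2 * n) = 1" using e by (simp add: power_mult mult.assoc)
  qed
  have "e \<noteq> 1" using z2 e by auto
  then have "e > 1" using e(1) by simp
  then show ?thesis using that char by blast
qed

lemma Sx_Z2:
  fixes \<zeta> :: complex
  assumes m1: "m \<ge> 1" and z: "\<zeta> ^ (2 * m) = 1" and z2: "\<zeta> ^ 2 \<noteq> 1"
  shows "Sx \<tau> m \<zeta> y = 0"
proof -
  have znz: "\<zeta> \<noteq> 0" using z m1 by (auto simp: power_0_left)
  note HT = HT_from[OF z, of \<tau>]
  obtain e where e: "e > 1" "\<And>n. \<zeta> ^ (2 * n) = 1 \<longleftrightarrow> e dvd n" using order_props[OF m1 z z2] by blast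
  obtain p where p: "prime p" "p dvd e" using prime_factor_nat[of e] e(1) by auto
  have em: "e dvd m" using e(2) z by blast
  have pm: "p dvd m" using p em by (metis dvd_trans)
  have p0: "p > 0" using p by (simp add: prime_gt_0_nat)
  define \<sigma> where "\<sigma> = \<zeta> ^ m"
  have \<sigma>: "\<sigma> = 1 \<or> \<sigma> = -1"
  proof -
    have "\<sigma> ^ 2 = 1" using z by (simp add: \<sigma>_def power_mult[symmetric] mult.commute)
    then show ?thesis by (simp add: power2_eq_1_iff)
  qed
  define r where "r d = int (m div d) * \<tau>" for d
  define V where "V d = (\<Sum>\<nu>\<in>partitions (m div d). (if good \<zeta> d \<nu> then of_int (r d) ^ size \<nu> / of_nat (zee \<nu>) * (\<Prod>i\<in>#\<nu>. brg (int d * int i) y) else 0))" for d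
  define W where "W d = (-1) powi r d * \<zeta> powi ((\<bar>r d\<bar> - 1) * int m) * V d" for d
  have SW: "Sx \<tau> m \<zeta> y = (\<Sum>d\<in>{d. d dvd m}. of_int (mobius d) * W d)"
    unfolding Sx_def
  proof (rule sum.cong[OF refl])
    fix d assume d: "d \<in> {d. d dvd m}"
    have "cf \<tau> m d \<nu> * (\<Prod>i\<in>#\<nu>. gs (int (m div d) * \<tau>) (int d * int i) \<zeta>) * (\<Prod>i\<in>#\<nu>. brg (int d * int i) y)
        = of_int (mobius d) * ((-1) powi r d * \<zeta> powi ((\<bar>r d\<bar> - 1) * int m) *
            (if good \<zeta> d \<nu> then of_int (r d) ^ size \<nu> / of_nat (zee \<nu>) * (\<Prod>i\<in>#\<nu>. brg (int d * int i) y) else 0))"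
      if \<nu>: "\<nu> \<in> partitions (m div d)" for \<nu>
    proof (cases "good \<zeta> d \<nu>")
      case True
      show ?thesis using prod_good_val[OF m1 znz HT _ \<nu> True, of "r d"] d True
        by (simp add: cf_def r_def)
    next
      case False
      show ?thesis using prod_not_good[OF m1 znz HT _ False] d False by simp
    qed
    then show "(\<Sum>\<nu>\<in>partitions (m div d). cf \<tau> m d \<nu> * (\<Prod>i\<in>#\<nu>. gs (int (m div d) * \<tau>) (int d * int i) \<zeta>) * (\<Prod>i\<in>#\<nu>. brg (int d * int i) y))
        = of_int (mobius d) * W d"
      unfolding W_def V_def by (simp add: sum_distrib_left)
  qed
  also have "\<dots> = 0"
  proof (rule mobius_pair[OF _ p(1) pm])
    show "m > 0" using m1 by simp
    fix d assume d: "d dvd m" "squarefree d" "\<not> p dvd d"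
    have d0: "d > 0" using d(1) m1 by (auto intro!: Nat.gr0I)
    have cop: "coprime d p" using prime_imp_coprime[OF p(1) d(3)] by (simp add: coprime_commute)
    have "d * p dvd m" using d(1) pm cop by (simp add: divides_mult)
    then obtain N' where mN: "m = d * p * N'" by (elim dvdE)
    have Nd: "m div d = p * N'" using mN d0 by simp
    have Ndp: "m div (d * p) = N'" using mN d0 p0 by simp
    have rr: "r d = int p * r (d * p)" unfolding r_def Nd Ndp by simp
    have Vd: "V d = V (d * p)"
    proof -
      define F where "F dd \<nu> = of_int (r dd) ^ size \<nu> / of_nat (zee \<nu>) * (\<Prod>i\<in>#\<nu>. brg (int dd * int i) y)" for dd \<nu>
      have fin: "finite (partitions n)" for n by (rule finite_partitions)
      have V_alt: "V dd = (\<Sum>\<nu>\<in>{\<nu> \<in> partitions (m div dd). good \<zeta> dd \<nu>}. F dd \<nu>)" for dd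
        unfolding V_def F_def by (simp only: sum.inter_filter[OF fin])
      have gd: "good \<zeta> d (image_mset ((*) p) \<mu>) \<longleftrightarrow> good \<zeta> (d * p) \<mu>" for \<mu>
        by (auto simp: good_def[OF m1 znz HT] mult_ac)
      have seteq: "{\<nu> \<in> partitions (m div d). good \<zeta> d \<nu>} = image_mset ((*) p) ` {\<mu> \<in> partitions N'. good \<zeta> (d * p) \<mu>}"
      proof (intro equalityI subsetI)
        fix \<nu> assume \<nu>: "\<nu> \<in> {\<nu> \<in> partitions (m div d). good \<zeta> d \<nu>}"
        have "\<forall>i\<in>#\<nu>. p dvd i"
        proof
          fix i assume "i \<in># \<nu>"
          then have "\<zeta> ^ (2 * (d * i)) = 1" using \<nu> unfolding good_def[OF m1 znz HT] by (simp add: mult.assoc)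
          then have "e dvd d * i" using e(2) by blast
          then have "p dvd d * i" using p(2) by (metis dvd_trans)
          then show "p dvd i" using p(1) d(3) by (simp add: prime_dvd_mult_iff)
        qed
        then have "\<nu> \<in> {\<nu> \<in> partitions (p * N'). \<forall>i\<in>#\<nu>. p dvd i}" using \<nu> Nd by simp
        then obtain \<mu> where \<mu>: "\<mu> \<in> partitions N'" "\<nu> = image_mset ((*) p) \<mu>"
          using partitions_scale[OF p0, of N'] by blast
        then have "good \<zeta> (d * p) \<mu>" using \<nu> gd by simp
        then show "\<nu> \<in> image_mset ((*) p) ` {\<mu> \<in> partitions N'. good \<zeta> (d * p) \<mu>}" using \<mu> by blast
      next
        fix \<nu> assume "\<nu> \<in> image_mset ((*) p) ` {\<mu> \<in> partitions N'. good \<zeta> (d * p) \<mu>}"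
        then obtain \<mu> where \<mu>: "\<mu> \<in> partitions N'" "good \<zeta> (d * p) \<mu>" "\<nu> = image_mset ((*) p) \<mu>" by blast
        then have "\<nu> \<in> partitions (p * N')" using partitions_scale[OF p0, of N'] by blast
        then show "\<nu> \<in> {\<nu> \<in> partitions (m div d). good \<zeta> d \<nu>}" using \<mu> gd Nd by simp
      qed
      have inj: "inj_on (image_mset ((*) p)) X" for X
        using image_mset_mult_inj[OF p0] by (rule inj_on_subset) simp
      have Feq: "F d (image_mset ((*) p) \<mu>) = F (d * p) \<mu>" for \<mu>
      proof -
        have "(\<Prod>i\<in>#image_mset ((*) p) \<mu>. brg (int d * int i) y) = (\<Prod>i\<in>#\<mu>. brg (int (d * p) * int i) y)"
          by (simp add: image_mset.compositionality o_def mult_ac)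
        moreover have "of_int (r d) ^ size \<mu> / of_nat (zee (image_mset ((*) p) \<mu>)) = (of_int (r (d * p)) ^ size \<mu> / of_nat (zee \<mu>) :: complex)"
          using p0 by (simp add: zee_scale rr power_mult_distrib)
        ultimately show ?thesis unfolding F_def by simp
      qed
      show ?thesis unfolding V_alt seteq Ndp sum.reindex[OF inj] by (simp add: o_def Feq)
    qed
    have sg: "(-1) powi r d * \<zeta> powi ((\<bar>r d\<bar> - 1) * int m) = (-1) powi r (d * p) * \<zeta> powi ((\<bar>r (d * p)\<bar> - 1) * int m)"
    proof (rule sign_eq[OF \<sigma>_def[symmetric] \<sigma> rr])
      show "odd p \<or> \<sigma> = -1 \<or> even (r (d * p))"
      proof (cases "odd p \<or> \<sigma> = -1")
        case False
        then have "even p" and s1: "\<zeta> ^ m = 1" using \<sigma> \<sigma>_def by auto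
        then have p2: "p = 2" using prime_odd_nat[OF p(1)] prime_ge_2_nat[OF p(1)] by fastforce
        have "even m" using pm p2 by simp
        then have "\<zeta> ^ (2 * (m div 2)) = 1" using s1 by simp
        then have "e dvd m div 2" using e(2) by blast
        then have "2 dvd m div 2" using p(2) p2 by (metis dvd_trans)
        then have "4 dvd m" using \<open>even m\<close> by (metis dvd_mult_div_cancel mult_dvd_mono numeral_Bit0 numeral_times_numeral dvd_refl semiring_norm(11)
              mult_2 numeral_Bit0_eq_double)
        then have "4 dvd d * (2 * N')" using mN p2 by (simp add: mult_ac)
        then have "2 * 2 dvd 2 * (d * N')" by (simp add: mult_ac)
        then have "2 dvd d * N'" using nat_mult_dvd_cancel1[of 2 2 "d * N'"] by simp
        moreover have "odd d" using d(3) p2 by simp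
        ultimately have "even N'" by auto
        then show ?thesis by (simp add: r_def Ndp)
      qed auto
    qed
    show "W d = W (d * p)" unfolding W_def Vd sg ..
  qed
  finally show ?thesis .
qed

lemma emb_const_power: "emb [:p ^ k:] = emb [:p:] ^ k"
  by (simp add: poly_const_pow[symmetric] emb_power)

lemma emb_Pn: "emb [:Pn n:] = (\<Sum>j<n. qh ^ (2 * j))"
proof -
  have "emb [:Pn n:] = (\<Sum>j<n. emb [:monom 1 (2 * j):])"
    unfolding Pn_def
    by (subst sum_hom_gen[of "\<lambda>x. emb [:x:]"]) (simp_all add: emb_add[symmetric] emb_0)
  also have "\<dots> = (\<Sum>j<n. qh ^ (2 * j))"
    by (simp add: monom_altdef emb_const_power qh_def)
  finally show ?thesis .
qed

lemma br_Pn: "br (int n) qh = emb [:Pn n:] * (qh ^ 2 - 1) / qh ^ n"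
proof -
  have "emb [:Pn n:] * (qh ^ 2 - 1) = qh ^ (2 * n) - 1" by (simp add: emb_Pn geom2)
  moreover have "br (int n) qh = (qh ^ (2 * n) - 1) / qh ^ n"
    using qh_nz by (simp add: br_def power_int_minus field_simps power_mult power2_eq_square flip: power_add)
  ultimately show ?thesis by simp
qed

lemma qh2: "qh ^ 2 - 1 \<noteq> 0"
  using qh_power_ne_1[of 2] by simp


lemma final_alg:
  fixes a b u s A B E :: "'a::field"
  assumes "a \<noteq> 0" "b \<noteq> 0" "u \<noteq> 0"
  shows "(s * (B * u / a ^ T) * (A * u / a ^ m) / (u / a) ^ 2) *
      (s * E * a ^ T * a ^ m * inverse a ^ 2 * inverse a ^ K * inverse b ^ K) = (s * s) * (A * B * E / (a * b) ^ K)"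
  using assms by (simp add: field_simps power_mult_distrib power2_eq_square)

lemma HT_T:
  fixes z :: complex
  assumes "z ^ (2 * (m * nat \<bar>\<tau>\<bar>)) = 1" "z \<noteq> 0"
  shows "z powi (2 * (int m * \<tau>)) = 1"
proof -
  have e: "2 * (int m * \<tau>) = int (2 * (m * nat \<bar>\<tau>\<bar>)) * sgn \<tau>"
    by (cases "\<tau> \<ge> 0") (simp_all add: abs_if sgn_if)
  show ?thesis unfolding e power_int_mult power_int_of_nat assms(1) by simp
qed

theorem main_div:
  fixes \<tau> :: int and m :: nat
  assumes tau: "\<tau> \<noteq> 0" and m1: "1 \<le> m"
  shows "\<exists>c. in_R c \<and> Sx \<tau> m qh ah = (br (int m * \<tau>) qh * br (int m) qh / (br 1 qh) ^ 2) * c"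
proof -
  obtain P K where PK: "Sx \<tau> m qh ah = emb P / emb QQ ^ K"
    and ev: "\<And>x y. x \<noteq> 0 \<Longrightarrow> y \<noteq> 0 \<Longrightarrow> Sx \<tau> m x y = ev P x y / (x * y) ^ K"
    using Rrep_Sx[OF m1, of \<tau>] unfolding Rrep_def by blast
  define T where "T = m * nat \<bar>\<tau>\<bar>"
  have T1: "T \<ge> 1" using tau m1 by (simp add: T_def)
  have evS: "ev P x y = Sx \<tau> m x y * (x * y) ^ K" if "x \<noteq> 0" "y \<noteq> 0" for x y
    using ev[OF that] that by simp
  have Pdiv: "P = smult (Pn m * Pn T) (map_poly (\<lambda>c. c div (Pn m * Pn T)) P)"
  proof (rule main_poly_div[OF m1 T1])
    fix z y :: complex assume z: "z ^ (2 * T) = 1" "z ^ (2 * m) \<noteq> 1" and y: "y \<noteq> 0"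
    have zn: "z \<noteq> 0" using z T1 by (auto simp: power_0_left)
    have "Sx \<tau> m z y = 0" by (rule Sx_Z1[OF m1 zn HT_T[OF z(1)[unfolded T_def] zn] z(2)])
    then show "ev P z y = 0" using evS[OF zn y] by simp
  next
    fix z y :: complex assume z: "z ^ (2 * m) = 1" "z ^ 2 \<noteq> 1" and y: "y \<noteq> 0"
    have zn: "z \<noteq> 0" using z m1 by (auto simp: power_0_left)
    have S0: "Sx \<tau> m z y = 0" by (rule Sx_Z2[OF m1 z])
    then show "ev P z y = 0 \<and> ((\<lambda>x. ev P x y) has_field_derivative 0) (at z)"
    proof (intro conjI)
      show "ev P z y = 0" using evS[OF zn y] S0 by simp
      have d2: "((\<lambda>x. (x * y) ^ K) has_field_derivative (of_nat K * (1 * y * (z * y) ^ (K - Suc 0)))) (at z)"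
        by (rule DERIV_power[OF DERIV_cmult_right[OF DERIV_ident]])
      have "((\<lambda>x. Sx \<tau> m x y * (x * y) ^ K) has_field_derivative
          (0 * (z * y) ^ K + of_nat K * (1 * y * (z * y) ^ (K - Suc 0)) * Sx \<tau> m z y)) (at z)"
        by (rule DERIV_mult[OF Sx_deriv[OF m1 zn z(1)] d2])
      then have "((\<lambda>x. Sx \<tau> m x y * (x * y) ^ K) has_field_derivative 0) (at z)" using S0 by simp
      then show "((\<lambda>x. ev P x y) has_field_derivative 0) (at z)"
        by (rule has_field_derivative_transform_within_open[where S="- {0}"]) (use zn y evS in auto)
    qed
  qed
  define Q where "Q = map_poly (\<lambda>c. c div (Pn m * Pn T)) P"
  have embP: "emb P = emb [:Pn m:] * emb [:Pn T:] * emb Q"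
  proof -
    have a: "[:Pn m:] * [:Pn T:] = [:Pn m * Pn T:]" by simp
    have b: "[:Pn m * Pn T:] * Q = smult (Pn m * Pn T) Q" by (simp only: mult_pCons_left mult_zero_left pCons_0_0 add_0_right)
    have "P = [:Pn m:] * [:Pn T:] * Q" unfolding a b using Pdiv by (simp only: Q_def)
    then show ?thesis by (metis emb_mult)
  qed
  define sg :: int where "sg = sgn \<tau>"
  have brT: "br (int m * \<tau>) qh = of_int sg * br (int T) qh"
  proof (cases "\<tau> > 0")
    case True then show ?thesis by (simp add: sg_def T_def)
  next
    case False
    then have "int m * \<tau> = - int T" using tau by (simp add: T_def)
    then show ?thesis using False tau by (simp add: sg_def br_def)
  qed
  have sg2: "(of_int sg :: rf) * of_int sg = 1" using tau by (simp add: sg_def sgn_if)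
  have br1: "br 1 qh = (qh ^ 2 - 1) / qh"
  proof -
    have o: "[:1:] = (1 :: rat poly poly)" by (simp add: one_pCons)
    have "emb [:1:] = 1" unfolding o by (rule emb_1)
    then show ?thesis using br_Pn[of 1] by (simp add: Pn_def)
  qed
  define c where "c = of_int sg * emb Q * qh ^ T * qh ^ m * inverse qh ^ 2 * inverse qh ^ K * inverse ah ^ K"
  have inR: "in_R c"
    unfolding c_def
    by (rule Rrep_in_R[of _ "\<lambda>x y. of_int sg * ev Q x y * x ^ T * x ^ m * inverse x ^ 2 * inverse x ^ K * inverse y ^ K"])
       (intro Rrep_mult Rrep_of_int Rrep_emb Rrep_power Rrep_qh Rrep_inv_qh Rrep_inv_ah)
  have "Sx \<tau> m qh ah = (br (int m * \<tau>) qh * br (int m) qh / (br 1 qh) ^ 2) * c"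
  proof -
    have l: "Sx \<tau> m qh ah = emb [:Pn m:] * emb [:Pn T:] * emb Q / (qh * ah) ^ K"
      using PK embP by (simp add: emb_QQ)
    have r: "(br (int m * \<tau>) qh * br (int m) qh / (br 1 qh) ^ 2) * c =
        (of_int sg * of_int sg) * (emb [:Pn m:] * emb [:Pn T:] * emb Q / (qh * ah) ^ K)"
      unfolding brT br_Pn br1 c_def using final_alg[OF qh_nz ah_nz qh2] by simp
    show ?thesis unfolding l r sg2 by simp
  qed
  then show ?thesis using inR by blast
qed

theorem lemma4p16:
  fixes \<tau> :: int and m :: nat
  assumes "\<tau> \<noteq> 0" and "1 \<le> m"
  shows "br (int m) qh * br (int m * \<tau>) qh * gf \<tau> m qh ah =
           (\<Sum>d\<in>{d. d dvd m}. \<Sum>\<nu>\<in>partitions (m div d).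
              (of_int (mobius d) * (-1) powi (int (m div d) * \<tau>) / of_nat (zee \<nu>)) *
              (\<Prod>i\<in>#\<nu>. br (int m * int i * \<tau>) qh / br (int d * int i) qh) *
              (\<Prod>i\<in>#\<nu>. br (int d * int i) ah))
       \<and> in_R (br (int m) qh * br (int m * \<tau>) qh * gf \<tau> m qh ah)
       \<and> (\<exists>c. in_R c \<and>
            br (int m) qh * br (int m * \<tau>) qh * gf \<tau> m qh ah =
              (br (int m * \<tau>) qh * br (int m) qh / (br 1 qh) ^ 2) * c)"
proof -
  have e: "br (int m) qh * br (int m * \<tau>) qh * gf \<tau> m qh ah = Sx \<tau> m qh ah"
    unfolding part1[OF assms] RHS_eq_Sx[OF assms(2)] ..
  show ?thesis
  proof (intro conjI)
    show "br (int m) qh * br (int m * \<tau>) qh * gf \<tau> m qh ah =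
           (\<Sum>d\<in>{d. d dvd m}. \<Sum>\<nu>\<in>partitions (m div d).
              (of_int (mobius d) * (-1) powi (int (m div d) * \<tau>) / of_nat (zee \<nu>)) *
              (\<Prod>i\<in>#\<nu>. br (int m * int i * \<tau>) qh / br (int d * int i) qh) *
              (\<Prod>i\<in>#\<nu>. br (int d * int i) ah))" by (rule part1[OF assms])
    show "in_R (br (int m) qh * br (int m * \<tau>) qh * gf \<tau> m qh ah)"
      unfolding e by (rule Rrep_in_R[OF Rrep_Sx[OF assms(2)]])
    show "\<exists>c. in_R c \<and> br (int m) qh * br (int m * \<tau>) qh * gf \<tau> m qh ah =
              (br (int m * \<tau>) qh * br (int m) qh / (br 1 qh) ^ 2) * c"
      unfolding e by (rule main_div[OF assms])
  qed
qed

end
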